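(* Assume conditions (C1)–(C6). If $\zeta,\tilde\zeta\in\Theta$ satisfy $\liminf_{k\to\infty}\|\zeta_k-\tilde\zeta_k\|=0$, then the pair $\varphi_\zeta,\varphi_{\tilde\zeta}$ is proximal: for every $\epsilon>0$ and every $E\in\mathbb N$ there exists an integer $k_0$ such that $\|\varphi_\zeta(t)-\varphi_{\tilde\zeta}(t)\|<\epsilon$ for all $t\in[\theta_{2k_0-1},\theta_{2(k_0+E)}]\cap\mathbb T_0$.
   Context: Fix integers $m,n\ge1$ and $r\ge0$. Cells are indexed by pairs $(i,j)$, $1\le i\le m$, $1\le j\le n$. The $r$-neighbourhood of $(i,j)$ is $N_r(i,j)=\{(h,l):1\le h\le m,\ 1\le l\le n,\ \max(|h-i|,|l-j|)\le r\}$. Fix constants $a_{ij}>0$, $C^{hl}_{ij}\ge0$, and a continuous function $f:\mathbb R\to\mathbb R$. Vectors of $\mathbb R^{mn}$ are written $v=\{v_{ij}\}$, with norm $\|v\|=\max_{(i,j)}|v_{ij}|$. Time scale: $\{\theta_k\}_{k\in\mathbb Z}$ is strictly increasing, $\theta_{-1}<0<\theta_0$, and there exist $\omega>0$ and $p\in\mathbb N$ with $\theta_{k+2p}=\theta_k+\omega$ for all $k$. Set $\mathbb T_0=\bigcup_{k\in\mathbb Z}[\theta_{2k-1},\theta_{2k}]$, $\delta_k=\theta_{2k+1}-\theta_{2k}$, $\eta_k=\theta_{2k}-\theta_{2k-1}$ (both $p$-periodic in $k$), $\delta=\max_{1\le k\le p}\delta_k$. On $\mathbb T_0'=\mathbb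 T_0\setminus\{\theta_{2k-1}:k\in\mathbb Z\}$ define $\psi(t)=t-\sum_{0<\theta_{2k}<t}\delta_k$ for $t\ge0$ and $\psi(t)=t+\sum_{t\le\theta_{2k}<0}\delta_k$ for $t<0$; put $s_k=\psi(\theta_{2k})$, so $s_k-s_{k-1}=\eta_k$, and write $\psi(\omega):=\omega-\sum_{k=1}^p\delta_k=\sum_{k=1}^p\eta_k$. Inputs: $\Lambda\subset\mathbb R^{mn}$ is compact and $F:\Lambda\to\Lambda$ is continuous. $\Theta$ is the set of all sequences $\zeta=\{\zeta_k\}_{k\in\mathbb Z}$, $\zeta_k=\{\zeta^{ij}_k\}\in\Lambda$, with $\zeta_{k+1}=F(\zeta_k)$ for all $k\in\mathbb Z$. For $\zeta\in\Theta$, $L_{ij}(t,\zeta)=\zeta^{ij}_k$ for $t\in[\theta_{2k-1},\theta_{2k}]$. Network $(N_\zeta)$ on $\mathbb T_0$: $x^\Delta_{ij}(t)=-a_{ij}x_{ij}(t)-\sum_{(h,l)\in N_r(i,j)}C^{hl}_{ij}f(x_{hl}(t))x_{ij}(t)+L_{ij}(t,\zeta)$, $t\in\mathbb T_0$, where the $\Delta$-derivative at $\theta_{2k}$ is $(x(\theta_{2k+1})-x(\theta_{2k}))/\delta_k$ and elsewhere the ordinary derivative. Concretely, a solution on $\mathbb T_0$ is a function continuous and (one-sidedly at endpoints) differentiable on each $[\theta_{2k-1},\theta_{2k}]$ satisfying there $x_{ij}'=-a_{ij}x_{ij}-\sum_{(h,l)\in N_r(i,j)}C^{hl}_{ij}f(x_{hl})x_{ij}+\zeta^{ij}_k$,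 together with $x_{ij}(\theta_{2k+1})=(1-\delta_ka_{ij})x_{ij}(\theta_{2k})-\delta_k\sum_{(h,l)\in N_r(i,j)}C^{hl}_{ij}f(x_{hl}(\theta_{2k}))x_{ij}(\theta_{2k})+\delta_k\zeta^{ij}_k$. Impulsive system $(I_\zeta)$: for $s\in(s_{k-1},s_k)$, $y_{ij}'(s)=-a_{ij}y_{ij}(s)-\sum_{(h,l)\in N_r(i,j)}C^{hl}_{ij}f(y_{hl}(s))y_{ij}(s)+\zeta^{ij}_k$, and at $s=s_k$, $y_{ij}(s_k+)-y_{ij}(s_k)=-\delta_ka_{ij}y_{ij}(s_k)-\delta_k\sum_{(h,l)\in N_r(i,j)}C^{hl}_{ij}f(y_{hl}(s_k))y_{ij}(s_k)+\delta_k\zeta^{ij}_k$. Solutions are left-continuous, continuous except for discontinuities of the first kind at the $s_k$. Let $u_{ij}(s,\tau)=e^{-a_{ij}(s-\tau)}\prod_{\nu=l}^{k}(1-\delta_\nu a_{ij})$ if $s_{l-1}<\tau\le s_l$, $s_k<s\le s_{k+1}$, $k\ge l$, and $u_{ij}(s,\tau)=e^{-a_{ij}(s-\tau)}$ if $s_k<\tau\le s\le s_{k+1}$. Let $\lambda_{ij}=a_{ij}-\frac1{\psi(\omega)}\sum_{\nu=0}^{p-1}\ln|1-\delta_\nu a_{ij}|$, $\lambda=\min_{(i,j)}\lambda_{ij}$. Conditions: (C1) $\delta_ka_{ij}\ne1$ for all $i,j,k$; (C2) $\lambda>0$; (C3) $\sup_{s\in\mathbb R}|f(s)|\le M_f$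 for some $M_f>0$; (C4) $|f(s_1)-f(s_2)|\le L_f|s_1-s_2|$ for all $s_1,s_2$, for some $L_f>0$. Under (C1),(C2) fix positive numbers $K_{ij}$ with $|u_{ij}(s,\tau)|\le K_{ij}e^{-\lambda_{ij}(s-\tau)}$ for $s\ge\tau$. Define $\bar c=\max_{(i,j)}\big(\frac{K_{ij}}{\lambda_{ij}}+\frac{p\delta K_{ij}}{1-e^{-\lambda_{ij}\psi(\omega)}}\big)\sum_{(h,l)\in N_r(i,j)}C^{hl}_{ij}$, $M_F=\max_{\eta\in\Lambda}\|F(\eta)\|$, $H_0=\frac{M_F}{1-M_f\bar c}\max_{(i,j)}\big(\frac{K_{ij}}{\lambda_{ij}}+\frac{p\delta K_{ij}}{1-e^{-\lambda_{ij}\psi(\omega)}}\big)$, $\bar d=(M_f+H_0L_f)\max_{(i,j)}K_{ij}\sum_{(h,l)\in N_r(i,j)}C^{hl}_{ij}$. (C5) $(M_f+H_0L_f)\bar c<1$. (C6) $-\lambda+\bar d+\frac{p}{\psi(\omega)}\ln(1+\delta\bar d)<0$. Under (C1)–(C5), for $\zeta\in\Theta$ the system $(I_\zeta)$ has a unique solution $\phi_\zeta$ on $\mathbb R$ with $\sup_s\|\phi_\zeta(s)\|\le H_0$; define $\varphi_\zeta:\mathbb T_0\to\mathbb R^{mn}$ by $\varphi_\zeta(t)=\phi_\zeta(\psi(t))$ for $t\in\mathbb T_0'$ and $\varphi_\zeta(\theta_{2k+1})=\phi_\zeta(s_k+)$. Then $\varphi_\zeta$ is the unique solution of $(N_\zeta)$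 on $\mathbb T_0$ with $\sup_{t\in\mathbb T_0}\|\varphi_\zeta(t)\|\le H_0$. *)

theory Defs
  imports "HOL-Analysis.Analysis"
begin

text \<open>Vectors of R^{mn} are functions on index pairs (i,j); only the values on
  the index set {1..m} x {1..n} matter.\<close>

type_synonym vec = "nat \<times> nat \<Rightarrow> real"

definition idxset :: "nat \<Rightarrow> nat \<Rightarrow> (nat \<times> nat) set" where
  "idxset m n = {1..m} \<times> {1..n}"

definition Rmn :: "nat \<Rightarrow> nat \<Rightarrow> vec set" where
  "Rmn m n = {v. \<forall>q. q \<notin> idxset m n \<longrightarrow> v q = 0}"

definition vnorm :: "nat \<Rightarrow> nat \<Rightarrow> vec \<Rightarrow> real" where
  "vnorm m n v = Max ((\<lambda>q. \<bar>v q\<bar>) ` idxset m n)"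

definition nbhd :: "nat \<Rightarrow> nat \<Rightarrow> nat \<Rightarrow> nat \<times> nat \<Rightarrow> (nat \<times> nat) set" where
  "nbhd m n r q = {(h,l) \<in> idxset m n.
      \<bar>int h - int (fst q)\<bar> \<le> int r \<and> \<bar>int l - int (snd q)\<bar> \<le> int r}"

definition Tzero :: "(int \<Rightarrow> real) \<Rightarrow> real set" where
  "Tzero \<theta> = (\<Union>k. {\<theta> (2*k - 1) .. \<theta> (2*k)})"

definition dlt :: "(int \<Rightarrow> real) \<Rightarrow> int \<Rightarrow> real" where
  "dlt \<theta> k = \<theta> (2*k + 1) - \<theta> (2*k)"

definition eta :: "(int \<Rightarrow> real) \<Rightarrow> int \<Rightarrow> real" where
  "eta \<theta> k = \<theta> (2*k) - \<theta> (2*k - 1)"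

definition dmax :: "(int \<Rightarrow> real) \<Rightarrow> nat \<Rightarrow> real" where
  "dmax \<theta> p = Max (dlt \<theta> ` {1..int p})"

definition psi_om :: "(int \<Rightarrow> real) \<Rightarrow> nat \<Rightarrow> real" where
  "psi_om \<theta> p = (\<Sum>k\<in>{1..int p}. eta \<theta> k)"

definition psi :: "(int \<Rightarrow> real) \<Rightarrow> real \<Rightarrow> real" where
  "psi \<theta> t = (if 0 \<le> t
      then t - (\<Sum>k\<in>{k. 0 < \<theta> (2*k) \<and> \<theta> (2*k) < t}. dlt \<theta> k)
      else t + (\<Sum>k\<in>{k. t \<le> \<theta> (2*k) \<and> \<theta> (2*k) < 0}. dlt \<theta> k))"

definition sk :: "(int \<Rightarrow> real) \<Rightarrow> int \<Rightarrow> real" where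
  "sk \<theta> k = psi \<theta> (\<theta> (2*k))"

definition six :: "(int \<Rightarrow> real) \<Rightarrow> real \<Rightarrow> int" where
  "six \<theta> t = (THE l. sk \<theta> (l - 1) < t \<and> t \<le> sk \<theta> l)"

text \<open>u_ij(s,tau) for s >= tau, with a = a_ij: if s_{l-1} < tau <= s_l and
  s_k < s <= s_{k+1}, the product runs over nu = l..k (empty if k = l - 1).\<close>
definition uf :: "(int \<Rightarrow> real) \<Rightarrow> real \<Rightarrow> real \<Rightarrow> real \<Rightarrow> real" where
  "uf \<theta> a s \<tau> = exp (- a * (s - \<tau>)) *
      (\<Prod>\<nu>\<in>{six \<theta> \<tau> .. six \<theta> s - 1}. (1 - dlt \<theta> \<nu> * a))"

definition lam :: "(int \<Rightarrow> real) \<Rightarrow> nat \<Rightarrow> real \<Rightarrow> real" where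
  "lam \<theta> p a = a - (1 / psi_om \<theta> p) * (\<Sum>\<nu>\<in>{0..<int p}. ln \<bar>1 - dlt \<theta> \<nu> * a\<bar>)"

definition lammin :: "(int \<Rightarrow> real) \<Rightarrow> nat \<Rightarrow> nat \<Rightarrow> nat \<Rightarrow> (nat \<times> nat \<Rightarrow> real) \<Rightarrow> real" where
  "lammin \<theta> p m n a = Min ((\<lambda>q. lam \<theta> p (a q)) ` idxset m n)"

definition kfac :: "(int \<Rightarrow> real) \<Rightarrow> nat \<Rightarrow> (nat \<times> nat \<Rightarrow> real) \<Rightarrow> (nat \<times> nat \<Rightarrow> real)
    \<Rightarrow> nat \<times> nat \<Rightarrow> real" where
  "kfac \<theta> p a K q = K q / lam \<theta> p (a q)
      + real p * dmax \<theta> p * K q / (1 - exp (- lam \<theta> p (a q) * psi_om \<theta> p))"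

definition csum :: "nat \<Rightarrow> nat \<Rightarrow> nat \<Rightarrow> (nat \<times> nat \<Rightarrow> nat \<times> nat \<Rightarrow> real) \<Rightarrow> nat \<times> nat \<Rightarrow> real" where
  "csum m n r C q = (\<Sum>hl\<in>nbhd m n r q. C q hl)"

definition cbar where
  "cbar \<theta> p m n r a C K = Max ((\<lambda>q. kfac \<theta> p a K q * csum m n r C q) ` idxset m n)"

definition MF :: "nat \<Rightarrow> nat \<Rightarrow> vec set \<Rightarrow> (vec \<Rightarrow> vec) \<Rightarrow> real" where
  "MF m n \<Lambda> F = (SUP \<eta>\<in>\<Lambda>. vnorm m n (F \<eta>))"

definition H0 where
  "H0 \<theta> p m n r a C K Mf \<Lambda> F =
     MF m n \<Lambda> F / (1 - Mf * cbar \<theta> p m n r a C K) * Max (kfac \<theta> p a K ` idxset m n)"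

definition dbar where
  "dbar \<theta> p m n r a C K Mf Lf \<Lambda> F =
     (Mf + H0 \<theta> p m n r a C K Mf \<Lambda> F * Lf) * Max ((\<lambda>q. K q * csum m n r C q) ` idxset m n)"

definition Theta :: "vec set \<Rightarrow> (vec \<Rightarrow> vec) \<Rightarrow> (int \<Rightarrow> vec) set" where
  "Theta \<Lambda> F = {\<zeta>. \<forall>k. \<zeta> k \<in> \<Lambda> \<and> \<zeta> (k + 1) = F (\<zeta> k)}"

definition is_sol where
  "is_sol \<theta> m n r a C f \<zeta> x \<longleftrightarrow>
    (\<forall>k. \<forall>q\<in>idxset m n.
      (\<forall>t\<in>{\<theta> (2*k - 1) .. \<theta> (2*k)}.
         ((\<lambda>s. x s q) has_real_derivative
            (- a q * x t q - (\<Sum>hl\<in>nbhd m n r q. C q hl * f (x t hl)) * x t q + \<zeta> k q))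
         (at t within {\<theta> (2*k - 1) .. \<theta> (2*k)})) \<and>
      x (\<theta> (2*k + 1)) q =
         (1 - dlt \<theta> k * a q) * x (\<theta> (2*k)) q
         - dlt \<theta> k * (\<Sum>hl\<in>nbhd m n r q. C q hl * f (x (\<theta> (2*k)) hl)) * x (\<theta> (2*k)) q
         + dlt \<theta> k * \<zeta> k q)"

end

theory Submission
  imports Defs
begin


lemma int_strict_mono_step:
  fixes h :: "int \<Rightarrow> real"
  assumes "\<And>k. h (k - 1) < h k" "i < j"
  shows "h i < h j"
proof -
  obtain d :: nat where d: "j = i + 1 + int d" using assms(2)
    by (metis add.commute add.right_neutral int_le_induct zless_imp_add1_zle zle_iff_zadd)
  have "h i < h (i + 1 + int d)"
  proof (induction d)
    case 0 then show ?case using assms(1)[of "i+1"] by simp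
  next
    case (Suc d)
    have e: "i + 1 + int (Suc d) = (i + 1 + int d) + 1" by simp
    have "h (i + 1 + int d) < h ((i + 1 + int d) + 1)" using assms(1)[of "(i + 1 + int d) + 1"] by (simp only: add_diff_cancel_right')
    then show ?case using Suc unfolding e by linarith
  qed
  then show ?thesis using d by simp
qed

lemma int_periodic:
  fixes h :: "int \<Rightarrow> real" and P :: int
  assumes "\<And>k. h (k + P) = h k"
  shows "h (r + P * m) = h r"
proof (induction m rule: int_induct[where k=0])
  case base then show ?case by simp
next
  case (step1 i) then show ?case using assms[of "r + P*i"] by (simp add: algebra_simps)
next
  case (step2 i) then show ?case using assms[of "r + P*(i-1)"] by (simp add: algebra_simps)
qed

lemma int_periodic_sum:
  fixes h :: "int \<Rightarrow> real"
  assumes "\<And>k. h (k + int p) = h k"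
  shows "(\<Sum>k\<in>{l+1..l+int p}. h k) = (\<Sum>k\<in>{1..int p}. h k)"
proof -
  define A where "A l = (\<Sum>k\<in>{l+1..l+int p}. h k)" for l
  have step: "A (l+1) = A l" for l
  proof (cases p)
    case 0 then show ?thesis by (simp add: A_def)
  next
    case (Suc q)
    have e1: "{l+1..l+int p} = insert (l+1) {l+2..l+int p}" using Suc by auto
    have e2: "{l+1+1..l+1+int p} = insert (l+1+int p) {l+2..l+int p}" using Suc by auto
    show ?thesis unfolding A_def e1 e2 using assms[of "l+1"] by (simp add: add.commute add.left_commute)
  qed
  have "A l = A 0"
  proof (induction l rule: int_induct[where k=0])
    case base then show ?case by simp
  next
    case (step1 i) then show ?case using step[of i] by simp
  next
    case (step2 i) then show ?case using step[of "i-1"] by simp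
  qed
  then show ?thesis by (simp add: A_def)
qed

lemma int_telescope:
  fixes h :: "int \<Rightarrow> real"
  assumes "b \<le> k"
  shows "(\<Sum>l\<in>{b..<k}. h l - h (l - 1)) = h (k - 1) - h (b - 1)"
  using assms
proof (induction k rule: int_ge_induct)
  case base then show ?case by simp
next
  case (step i)
  have "{b..<i+1} = insert i {b..<i}" using step by auto
  then show ?case using step by simp
qed

lemma int_sum_last:
  fixes h :: "int \<Rightarrow> real"
  assumes "b \<le> k"
  shows "(\<Sum>l\<in>{b..<k+1}. h l) = (\<Sum>l\<in>{b..<k}. h l) + h k"
proof -
  have "{b..<k+1} = insert k {b..<k}" using assms by auto
  then show ?thesis by simp
qed

lemma int_prod_last:
  fixes h :: "int \<Rightarrow> real"
  assumes "b \<le> k"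
  shows "(\<Prod>l\<in>{b..<k+1}. h l) = (\<Prod>l\<in>{b..<k}. h l) * h k"
proof -
  have "{b..<k+1} = insert k {b..<k}" using assms by auto
  then show ?thesis by simp
qed

lemma int_prod_split:
  fixes h :: "int \<Rightarrow> real"
  assumes "b \<le> l" "l \<le> k"
  shows "(\<Prod>\<nu>\<in>{b..<k}. h \<nu>) = (\<Prod>\<nu>\<in>{b..<l}. h \<nu>) * (\<Prod>\<nu>\<in>{l..<k}. h \<nu>)"
proof -
  have "{b..<k} = {b..<l} \<union> {l..<k}" using assms by auto
  moreover have "{b..<l} \<inter> {l..<k} = {}" by auto
  ultimately show ?thesis by (simp add: prod.union_disjoint)
qed

lemma geom_div_sum:
  fixes r :: real
  assumes "0 \<le> r" "r < 1" "1 \<le> p"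
  shows "(\<Sum>j<n. r ^ (j div p)) \<le> real p / (1 - r)"
proof -
  have eq: "(\<Sum>j<p*N. r ^ (j div p)) = real p * (\<Sum>i<N. r ^ i)" for N
  proof (induction N)
    case 0 then show ?case by simp
  next
    case (Suc N)
    have "{..<p * Suc N} = {..<p*N} \<union> {p*N..<p*N+p}" by (auto simp: algebra_simps)
    moreover have "{..<p*N} \<inter> {p*N..<p*N+p} = {}" by auto
    ultimately have "(\<Sum>j<p*Suc N. r ^ (j div p)) = (\<Sum>j<p*N. r ^ (j div p)) + (\<Sum>j\<in>{p*N..<p*N+p}. r ^ (j div p))"
      by (simp add: sum.union_disjoint)
    moreover have "(\<Sum>j\<in>{p*N..<p*N+p}. r ^ (j div p)) = (\<Sum>j\<in>{p*N..<p*N+p}. r ^ N)"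
    proof (rule sum.cong)
      fix j assume "j \<in> {p*N..<p*N+p}"
      then have "p * N \<le> j" "j < p * Suc N" by auto
      then have "j div p = N" by (rule div_nat_eqI)
      then show "r ^ (j div p) = r ^ N" by simp
    qed simp
    ultimately show ?case using Suc by (simp add: algebra_simps)
  qed
  have "(\<Sum>j<n. r ^ (j div p)) \<le> (\<Sum>j<p*n. r ^ (j div p))"
    by (rule sum_mono2) (use assms in auto)
  also have "\<dots> = real p * (\<Sum>i<n. r ^ i)" by (rule eq)
  also have "(\<Sum>i<n. r ^ i) \<le> 1 / (1 - r)"
    using assms by (simp add: sum_gp_strict divide_right_mono)
  then have "real p * (\<Sum>i<n. r ^ i) \<le> real p * (1/(1-r))" by (intro mult_left_mono) auto
  finally show ?thesis by simp
qed




locale ts =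
  fixes \<theta> :: "int \<Rightarrow> real" and p :: nat and \<omega> :: real
  assumes mono: "strict_mono \<theta>" and t1: "\<theta> (-1) < 0" and t0: "0 < \<theta> 0"
    and om: "0 < \<omega>" and p1: "1 \<le> p" and per: "\<And>k. \<theta> (k + 2 * int p) = \<theta> k + \<omega>"
begin

lemma th_less: "i < j \<Longrightarrow> \<theta> i < \<theta> j"
  using mono by (simp add: strict_mono_less)

lemma th_le: "i \<le> j \<Longrightarrow> \<theta> i \<le> \<theta> j"
  using mono by (simp add: strict_mono_less_eq)

lemma th_less_iff: "\<theta> i < \<theta> j \<longleftrightarrow> i < j"
  using mono by (simp add: strict_mono_less)

lemma th_le_iff: "\<theta> i \<le> \<theta> j \<longleftrightarrow> i \<le> j"
  using mono by (simp add: strict_mono_less_eq)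

lemma dlt_pos: "0 < dlt \<theta> k"
  unfolding dlt_def using th_less[of "2*k" "2*k+1"] by simp

lemma eta_pos: "0 < eta \<theta> k"
  unfolding eta_def using th_less[of "2*k-1" "2*k"] by simp

lemma dlt_per: "dlt \<theta> (k + int p) = dlt \<theta> k"
proof -
  have "\<theta> (2 * (k + int p) + 1) = \<theta> ((2*k+1) + 2 * int p)" by (simp add: algebra_simps)
  moreover have "\<theta> (2 * (k + int p)) = \<theta> ((2*k) + 2 * int p)" by (simp add: algebra_simps)
  ultimately show ?thesis unfolding dlt_def using per by simp
qed

lemma eta_per: "eta \<theta> (k + int p) = eta \<theta> k"
proof -
  have "\<theta> (2 * (k + int p) - 1) = \<theta> ((2*k-1) + 2 * int p)" by (simp add: algebra_simps)
  moreover have "\<theta> (2 * (k + int p)) = \<theta> ((2*k) + 2 * int p)" by (simp add: algebra_simps)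
  ultimately show ?thesis unfolding eta_def using per by simp
qed

lemma th_pos_iff: "0 < \<theta> (2*k) \<longleftrightarrow> 0 \<le> k"
proof
  assume "0 < \<theta> (2*k)"
  show "0 \<le> k"
  proof (rule ccontr)
    assume "\<not> 0 \<le> k"
    then have "2*k < -1" by simp
    then have "\<theta> (2*k) < \<theta> (-1)" by (rule th_less)
    then show False using t1 \<open>0 < \<theta> (2*k)\<close> by simp
  qed
next
  assume "0 \<le> k" then have "\<theta> 0 \<le> \<theta> (2*k)" by (intro th_le) simp
  then show "0 < \<theta> (2*k)" using t0 by simp
qed

lemma sk_formula:
  "sk \<theta> k = \<theta> (2*k) - (\<Sum>l\<in>{0..<k}. dlt \<theta> l) + (\<Sum>l\<in>{k..<0}. dlt \<theta> l)"
proof (cases "0 \<le> k")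
  case True
  then have pos: "0 \<le> \<theta> (2*k)" using th_pos_iff[of k] by simp
  have set: "{k'. 0 < \<theta> (2*k') \<and> \<theta> (2*k') < \<theta> (2*k)} = {0..<k}"
    by (auto simp: th_pos_iff th_less_iff)
  have "{k..<0::int} = {}" using True by auto
  then show ?thesis unfolding sk_def psi_def using pos set by simp
next
  case False
  have "\<theta> (2*k) < \<theta> (-1)" using False by (intro th_less) simp
  then have neg: "\<not> 0 \<le> \<theta> (2*k)" using t1 by simp
  have neg': "\<theta> (2*k') < 0 \<longleftrightarrow> k' < 0" for k'
    using th_pos_iff[of k'] by (smt (verit, best) t1 th_less)
  have set: "{k'. \<theta> (2*k) \<le> \<theta> (2*k') \<and> \<theta> (2*k') < 0} = {k..<0}"
    by (auto simp: neg' th_le_iff)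
  have "{0..<k} = {}" using False by auto
  then show ?thesis unfolding sk_def psi_def using neg set by simp
qed

lemma sk_diff: "sk \<theta> k - sk \<theta> (k - 1) = eta \<theta> k"
proof -
  consider "1 \<le> k" | "k = 0" | "k \<le> -1" by linarith
  then show ?thesis
  proof cases
    case 1
    have "{0..<k} = insert (k-1) {0..<k-1}" using 1 by auto
    moreover have "{k..<0} = ({}::int set)" "{k-1..<0} = ({}::int set)" using 1 by auto
    ultimately show ?thesis unfolding sk_formula eta_def dlt_def
      by (simp add: algebra_simps)
  next
    case 2
    have "{-1..<0::int} = {-1}" by auto
    then show ?thesis unfolding sk_formula eta_def dlt_def 2 by simp
  next
    case 3
    have "{k-1..<0} = insert (k-1) {k..<0}" using 3 by auto
    moreover have "{0..<k} = ({}::int set)" "{0..<k-1} = ({}::int set)" using 3 by auto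
    ultimately show ?thesis unfolding sk_formula eta_def dlt_def
      by (simp add: algebra_simps)
  qed
qed

lemma sk_less: "i < j \<Longrightarrow> sk \<theta> i < sk \<theta> j"
  by (rule int_strict_mono_step) (use sk_diff eta_pos in \<open>smt (verit)\<close>)

lemma sk_le: "i \<le> j \<Longrightarrow> sk \<theta> i \<le> sk \<theta> j"
  using sk_less[of i j] by (cases "i = j") auto

lemma sk_shift: "sk \<theta> (l + int j) - sk \<theta> l = (\<Sum>k\<in>{l+1..l+int j}. eta \<theta> k)"
proof (induction j)
  case 0 then show ?case by simp
next
  case (Suc j)
  have "{l+1..l+int (Suc j)} = insert (l + int j + 1) {l+1..l+int j}" by auto
  then have "(\<Sum>k\<in>{l+1..l+int (Suc j)}. eta \<theta> k) = eta \<theta> (l + int j + 1) + (\<Sum>k\<in>{l+1..l+int j}. eta \<theta> k)"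
    by simp
  moreover have "sk \<theta> (l + int j + 1) - sk \<theta> (l + int j) = eta \<theta> (l + int j + 1)"
    using sk_diff[of "l + int j + 1"] by simp
  ultimately show ?case using Suc by (simp add: algebra_simps)
qed

lemma sk_per: "sk \<theta> (l + int p) = sk \<theta> l + psi_om \<theta> p"
  using sk_shift[of l p] int_periodic_sum[of "eta \<theta>" p l] eta_per unfolding psi_om_def by simp

lemma sk_per_m: "sk \<theta> (l + int p * int m) = sk \<theta> l + real m * psi_om \<theta> p"
proof (induction m)
  case 0 then show ?case by simp
next
  case (Suc m)
  have "l + int p * int (Suc m) = (l + int p * int m) + int p" by (simp add: algebra_simps)
  then show ?case using sk_per[of "l + int p * int m"] Suc by (simp add: algebra_simps)
qed

lemma psi_om_pos: "0 < psi_om \<theta> p"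
proof -
  have "sk \<theta> 0 < sk \<theta> (0 + int p)" using p1 by (intro sk_less) simp
  then show ?thesis using sk_per[of 0] by simp
qed

lemma rep: obtains r where "r \<in> {1..int p}" "\<exists>m. k = r + int p * m"
proof -
  define r where "r = (k - 1) mod int p + 1"
  have "(k-1) mod int p < int p" "0 \<le> (k-1) mod int p" using p1 by simp_all
  then have "r \<in> {1..int p}" unfolding r_def by auto
  moreover have "k = r + int p * ((k-1) div int p)" unfolding r_def
    by (metis add.commute add.left_commute diff_add_cancel mod_mult_div_eq mult.commute)
  ultimately show ?thesis using that by blast
qed

lemma dlt_le_dmax: "dlt \<theta> k \<le> dmax \<theta> p"
proof -
  obtain r m where r: "r \<in> {1..int p}" "k = r + int p * m" using rep by metis
  have "dlt \<theta> k = dlt \<theta> r" using r(2) int_periodic[of "dlt \<theta>" "int p" r m] dlt_per by simp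
  then show ?thesis unfolding dmax_def using r(1) by (simp add: Max_ge)
qed

lemma eta_le_psi: "eta \<theta> k \<le> psi_om \<theta> p"
proof -
  obtain r m where r: "r \<in> {1..int p}" "k = r + int p * m" using rep by metis
  have "eta \<theta> k = eta \<theta> r" using r(2) int_periodic[of "eta \<theta>" "int p" r m] eta_per by simp
  also have "\<dots> \<le> psi_om \<theta> p" unfolding psi_om_def
    using r(1) by (intro member_le_sum) (auto intro: less_imp_le eta_pos)
  finally show ?thesis .
qed

lemma dmax_pos: "0 < dmax \<theta> p"
  using dlt_le_dmax[of 0] dlt_pos[of 0] by simp

lemma six_eq: "sk \<theta> (k-1) < S \<Longrightarrow> S \<le> sk \<theta> k \<Longrightarrow> six \<theta> S = k"
  unfolding six_def
proof (rule the_equality)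
  fix l assume a: "sk \<theta> (l - 1) < S \<and> S \<le> sk \<theta> l" and b: "sk \<theta> (k-1) < S" "S \<le> sk \<theta> k"
  show "l = k"
  proof (rule ccontr)
    assume "l \<noteq> k"
    then consider "l < k" | "k < l" by linarith
    then show False
    proof cases
      case 1 then have "sk \<theta> l \<le> sk \<theta> (k-1)" by (intro sk_le) simp
      then show False using a b by simp
    next
      case 2 then have "sk \<theta> k \<le> sk \<theta> (l-1)" by (intro sk_le) simp
      then show False using a b by simp
    qed
  qed
qed simp

lemma Tzero_iff: "t \<in> Tzero \<theta> \<longleftrightarrow> (\<exists>k. t \<in> {\<theta> (2*k-1)..\<theta> (2*k)})"
  unfolding Tzero_def by blast

lemma interval_unique:
  assumes "t \<in> {\<theta> (2*k-1)..\<theta> (2*k)}" "t \<in> {\<theta> (2*l-1)..\<theta> (2*l)}"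
  shows "k = l"
proof (rule ccontr)
  assume "k \<noteq> l"
  then consider "k < l" | "l < k" by linarith
  then show False
  proof cases
    case 1 then have "\<theta> (2*k) < \<theta> (2*l-1)" by (intro th_less) simp
    then show False using assms by simp
  next
    case 2 then have "\<theta> (2*l) < \<theta> (2*k-1)" by (intro th_less) simp
    then show False using assms by simp
  qed
qed

lemma sk_prev: "sk \<theta> (k-1) = sk \<theta> k - eta \<theta> k"
  using sk_diff[of k] by simp

end



context ts begin

lemma kernel:
  assumes apos: "0 < a"
    and KB: "\<And>s \<tau>. \<tau> \<le> s \<Longrightarrow> \<bar>uf \<theta> a s \<tau>\<bar> \<le> Kc * exp (- lm * (s - \<tau>))"
    and lk: "l \<le> k" and D0: "0 \<le> D" and Dlo: "sk \<theta> (k-1) - sk \<theta> l \<le> D"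
    and Dhi: "D \<le> sk \<theta> k - sk \<theta> (l-1)"
  shows "\<bar>\<Prod>\<nu>\<in>{l..<k}. (1 - dlt \<theta> \<nu> * a)\<bar> * exp (- a * D) \<le> Kc * exp (- lm * D)"
proof -
  define P where "P = \<bar>\<Prod>\<nu>\<in>{l..<k}. (1 - dlt \<theta> \<nu> * a)\<bar>"
  define lo where "lo = (if l = k then 0 else sk \<theta> (k-1) - sk \<theta> l)"
  define hi where "hi = sk \<theta> k - sk \<theta> (l-1)"
  have lo0: "0 \<le> lo"
    unfolding lo_def using lk sk_le[of l "k-1"] by auto
  have lohi: "lo < hi"
  proof (cases "l = k")
    case True then show ?thesis unfolding lo_def hi_def using sk_less[of "k-1" k] by simp
  next
    case False
    then show ?thesis unfolding lo_def hi_def using sk_less[of "k-1" k] sk_less[of "l-1" l] by simp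
  qed
  have uf_eq: "uf \<theta> a S T = exp (- a * (S - T)) * (\<Prod>\<nu>\<in>{l..<k}. (1 - dlt \<theta> \<nu> * a))"
    if "six \<theta> S = k" "six \<theta> T = l" for S T
  proof -
    have "{l..k-1} = {l..<k}" by auto
    then show ?thesis unfolding uf_def that by simp
  qed
  have inner: "P * exp (- a * D) \<le> Kc * exp (- lm * D)" if D: "D \<in> {lo<..<hi}" for D
  proof -
    have Dpos: "0 < D" using D lo0 by simp
    obtain S T where ST: "six \<theta> S = k" "six \<theta> T = l" "S - T = D"
    proof (cases "D \<le> sk \<theta> k - sk \<theta> l")
      case True
      then have "l \<noteq> k" using Dpos by auto
      then have "sk \<theta> (k-1) < sk \<theta> l + D" using D unfolding lo_def by simp
      then have "six \<theta> (sk \<theta> l + D) = k" using True by (intro six_eq) simp_all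
      moreover have "six \<theta> (sk \<theta> l) = l" using sk_less[of "l-1" l] by (intro six_eq) simp_all
      ultimately show ?thesis using that by fastforce
    next
      case False
      have "six \<theta> (sk \<theta> k) = k" using sk_less[of "k-1" k] by (intro six_eq) simp_all
      moreover have "six \<theta> (sk \<theta> k - D) = l" using False D unfolding hi_def by (intro six_eq) simp_all
      ultimately show ?thesis using that by fastforce
    qed
    have "\<bar>uf \<theta> a S T\<bar> \<le> Kc * exp (- lm * (S - T))" using ST Dpos by (intro KB) simp
    then show ?thesis using uf_eq[OF ST(1,2)] ST(3) unfolding P_def by (simp add: abs_mult mult.commute)
  qed
  have cl: "closed {D. P * exp (- a * D) \<le> Kc * exp (- lm * D)}"
    by (intro closed_Collect_le continuous_intros)
  have "closure {lo<..<hi} \<subseteq> {D. P * exp (- a * D) \<le> Kc * exp (- lm * D)}"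
    by (rule closure_minimal) (use inner cl in auto)
  moreover have "closure {lo<..<hi} = {lo..hi}" using lohi by (rule closure_greaterThanLessThan)
  moreover have "D \<in> {lo..hi}" using D0 Dlo Dhi unfolding lo_def hi_def by auto
  ultimately show ?thesis unfolding P_def by auto
qed

lemma jump_sum:
  assumes nu: "0 < \<nu>" and bk: "b \<le> k" and S: "sk \<theta> (k-1) \<le> S"
  shows "(\<Sum>l\<in>{b..<k}. dlt \<theta> l * exp (- \<nu> * (S - sk \<theta> l)))
           \<le> real p * dmax \<theta> p / (1 - exp (- \<nu> * psi_om \<theta> p))"
proof -
  define r where "r = exp (- \<nu> * psi_om \<theta> p)"
  have r0: "0 \<le> r" and r1: "r < 1" unfolding r_def using nu psi_om_pos by auto
  define n where "n = nat (k - b)"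
  have "(\<Sum>l\<in>{b..<k}. dlt \<theta> l * exp (- \<nu> * (S - sk \<theta> l)))
        \<le> (\<Sum>l\<in>{b..<k}. dmax \<theta> p * exp (- \<nu> * (sk \<theta> (k-1) - sk \<theta> l)))"
  proof (rule sum_mono)
    fix l assume "l \<in> {b..<k}"
    have "exp (- \<nu> * (S - sk \<theta> l)) \<le> exp (- \<nu> * (sk \<theta> (k-1) - sk \<theta> l))"
      using S nu by (simp add: mult_left_mono)
    then show "dlt \<theta> l * exp (- \<nu> * (S - sk \<theta> l)) \<le> dmax \<theta> p * exp (- \<nu> * (sk \<theta> (k-1) - sk \<theta> l))"
      using dlt_le_dmax[of l] dlt_pos[of l] by (intro mult_mono) auto
  qed
  also have "\<dots> = (\<Sum>j<n. dmax \<theta> p * exp (- \<nu> * (sk \<theta> (k-1) - sk \<theta> (k - 1 - int j))))"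
    by (rule sum.reindex_bij_witness[where i = "\<lambda>j. k - 1 - int j" and j = "\<lambda>l. nat (k - 1 - l)"])
       (auto simp: n_def)
  also have "\<dots> \<le> (\<Sum>j<n. dmax \<theta> p * r ^ (j div p))"
  proof (rule sum_mono)
    fix j assume "j \<in> {..<n}"
    define L where "L = k - 1 - int j"
    have "int p * int (j div p) \<le> int j"
      by (metis div_mult_self1_is_m div_le_dividend mult.commute of_nat_le_iff of_nat_mult times_div_less_eq_dividend)
    then have "sk \<theta> (L + int p * int (j div p)) \<le> sk \<theta> (k-1)" unfolding L_def by (intro sk_le) simp
    then have "real (j div p) * psi_om \<theta> p \<le> sk \<theta> (k-1) - sk \<theta> L" using sk_per_m[of L "j div p"] by simp
    then have "exp (- \<nu> * (sk \<theta> (k-1) - sk \<theta> L)) \<le> exp (- \<nu> * (real (j div p) * psi_om \<theta> p))"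
      using nu by (simp add: mult_left_mono)
    also have "\<dots> = r ^ (j div p)" unfolding r_def by (simp add: exp_of_nat_mult[symmetric] algebra_simps)
    finally show "dmax \<theta> p * exp (- \<nu> * (sk \<theta> (k-1) - sk \<theta> (k - 1 - int j))) \<le> dmax \<theta> p * r ^ (j div p)"
      unfolding L_def using dmax_pos by (intro mult_left_mono) auto
  qed
  also have "\<dots> = dmax \<theta> p * (\<Sum>j<n. r ^ (j div p))" by (simp add: sum_distrib_left)
  also have "\<dots> \<le> dmax \<theta> p * (real p / (1 - r))"
    using geom_div_sum[OF r0 r1 p1] dmax_pos by (intro mult_left_mono) auto
  finally show ?thesis unfolding r_def by (simp add: mult.commute)
qed

end



lemma ftc_lin:
  fixes y g :: "real \<Rightarrow> real"
  assumes at: "\<alpha> \<le> t" "t \<le> \<beta>"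
    and D: "\<And>x. x \<in> {\<alpha>..\<beta>} \<Longrightarrow> (y has_real_derivative (-a * y x + g x)) (at x within {\<alpha>..\<beta>})"
    and C: "C \<noteq> 0"
  shows "((\<lambda>x. g x / (C * exp (-a*x))) has_integral
           (y t / (C * exp (-a*t)) - y \<alpha> / (C * exp (-a*\<alpha>)))) {\<alpha>..t}"
proof -
  have eqf: "\<And>x. g x / (C * exp (-a*x)) = g x * exp (a*x) / C"
    and eqy: "\<And>x. y x / (C * exp (-a*x)) = y x * exp (a*x) / C"
    using C by (simp_all add: exp_minus field_simps)
  have d: "((\<lambda>x. y x * exp (a*x) / C) has_vector_derivative (g x * exp (a*x) / C)) (at x within {\<alpha>..t})"
    if x: "x \<in> {\<alpha>..t}" for x
  proof -
    have Dx: "(y has_real_derivative (-a * y x + g x)) (at x within {\<alpha>..t})"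
      by (rule DERIV_subset[OF D]) (use x at in auto)
    have e: "((\<lambda>x. exp(a*x)) has_real_derivative (exp(a*x)*a)) (at x within {\<alpha>..t})"
      by (auto intro!: derivative_eq_intros)
    have "((\<lambda>x. y x * exp (a*x) / C) has_real_derivative
            (((-a * y x + g x) * exp (a*x) + (exp (a*x) * a) * y x) / C)) (at x within {\<alpha>..t})"
      by (intro DERIV_cdivide DERIV_mult Dx e)
    moreover have "((-a * y x + g x) * exp (a*x) + (exp (a*x) * a) * y x) / C = g x * exp (a*x) / C"
      by (simp add: algebra_simps)
    ultimately show ?thesis using has_real_derivative_iff_has_vector_derivative by metis
  qed
  have "((\<lambda>x. g x * exp (a*x) / C) has_integral (y t * exp (a*t) / C - y \<alpha> * exp (a*\<alpha>) / C)) {\<alpha>..t}"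
    by (rule fundamental_theorem_of_calculus[OF at(1) d])
  then show ?thesis unfolding eqf eqy .
qed

lemma int_abs_bound:
  fixes f h :: "real \<Rightarrow> real"
  assumes "(f has_integral Jf) X" "(h has_integral Jh) X" "\<And>x. x \<in> X \<Longrightarrow> \<bar>c * f x\<bar> \<le> h x"
  shows "\<bar>c\<bar> * \<bar>Jf\<bar> \<le> Jh"
proof -
  have cf: "((\<lambda>x. c * f x) has_integral (c * Jf)) X" by (rule has_integral_mult_right[OF assms(1)])
  have "c * Jf \<le> Jh" by (rule has_integral_le[OF cf assms(2)]) (use assms(3) in \<open>auto simp: abs_le_iff\<close>)
  moreover have "- Jh \<le> c * Jf"
  proof (rule has_integral_le[OF has_integral_neg[OF assms(2)] cf])
    fix x assume "x \<in> X"
    then have "\<bar>c * f x\<bar> \<le> h x" by (rule assms(3))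
    then show "- h x \<le> c * f x" by linarith
  qed
  ultimately show ?thesis by (simp add: abs_mult[symmetric] abs_le_iff)
qed




definition sg :: "(int \<Rightarrow> real) \<Rightarrow> int \<Rightarrow> real \<Rightarrow> real" where
  "sg \<theta> k t = t - \<theta> (2*k) + sk \<theta> k"

definition kf :: "(int \<Rightarrow> real) \<Rightarrow> nat \<Rightarrow> real \<Rightarrow> real \<Rightarrow> real" where
  "kf \<theta> p Kc \<nu> = Kc / \<nu> + real p * dmax \<theta> p * Kc / (1 - exp (- \<nu> * psi_om \<theta> p))"

lemma frac_aux: "(f::real) \<noteq> 0 \<Longrightarrow> (f*Y + D)/(f*P) = Y/P + D/(f*P)"
  by (simp add: add_divide_distrib)

context ts begin

lemma sg_bounds:
  assumes "t \<in> {\<theta> (2*k-1)..\<theta> (2*k)}"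
  shows "sk \<theta> (k-1) \<le> sg \<theta> k t" "sg \<theta> k t \<le> sk \<theta> k"
  using assms sk_prev[of k] unfolding sg_def eta_def by auto

lemma sg_right: "sg \<theta> k (\<theta> (2*k)) = sk \<theta> k"
  unfolding sg_def by simp

lemma sg_left: "sg \<theta> k (\<theta> (2*k-1)) = sk \<theta> (k-1)"
  unfolding sg_def using sk_prev[of k] unfolding eta_def by simp

lemma sg_next: "sg \<theta> (k+1) (\<theta> (2*k+1)) = sk \<theta> k"
proof -
  have "2*(k+1) - 1 = 2*k+1" by simp
  then have "sg \<theta> (k+1) (\<theta> (2*(k+1)-1)) = sk \<theta> (k+1-1)" by (metis sg_left)
  then show ?thesis by (simp add: \<open>2*(k+1) - 1 = 2*k+1\<close> add.commute)
qed


lemma scalar_bound: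
  fixes y :: "real \<Rightarrow> real" and g :: "int \<Rightarrow> real \<Rightarrow> real"
  assumes apos: "0 < a" and C1': "\<And>k. dlt \<theta> k * a \<noteq> 1"
    and kern: "\<And>l k D. l \<le> k \<Longrightarrow> 0 \<le> D \<Longrightarrow> sk \<theta> (k-1) - sk \<theta> l \<le> D \<Longrightarrow> D \<le> sk \<theta> k - sk \<theta> (l-1) \<Longrightarrow>
        \<bar>\<Prod>\<nu>\<in>{l..<k}. (1 - dlt \<theta> \<nu> * a)\<bar> * exp (- a * D) \<le> Kc * exp (- lm * D)"
    and deriv: "\<And>k t. b \<le> k \<Longrightarrow> k \<le> k1 \<Longrightarrow> t \<in> {\<theta> (2*k-1)..\<theta> (2*k)} \<Longrightarrow>
        (y has_real_derivative (- a * y t + g k t)) (at t within {\<theta> (2*k-1)..\<theta> (2*k)})"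
    and jump: "\<And>k. b \<le> k \<Longrightarrow> k < k1 \<Longrightarrow>
        y (\<theta> (2*k+1)) = (1 - dlt \<theta> k * a) * y (\<theta> (2*k)) + dlt \<theta> k * g k (\<theta> (2*k))"
    and gb: "\<And>k t. b \<le> k \<Longrightarrow> k \<le> k1 \<Longrightarrow> t \<in> {\<theta> (2*k-1)..\<theta> (2*k)} \<Longrightarrow>
        \<bar>g k t\<bar> \<le> c1 * exp (- \<mu> * (sg \<theta> k t - sk \<theta> (b-1))) + c2"
    and mu: "0 \<le> \<mu>" "\<mu> < lm" and c: "0 \<le> c1" "0 \<le> c2" and Kc: "0 \<le> Kc"
    and kt: "b \<le> k" "k \<le> k1" "t \<in> {\<theta> (2*k-1)..\<theta> (2*k)}"
  shows "exp (\<mu> * (sg \<theta> k t - sk \<theta> (b-1))) * \<bar>y t\<bar>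
          \<le> Kc * \<bar>y (\<theta> (2*b-1))\<bar> + c1 * kf \<theta> p Kc (lm - \<mu>)
             + c2 * exp (\<mu> * (sg \<theta> k t - sk \<theta> (b-1))) * kf \<theta> p Kc lm"
proof -
  define s0 where "s0 = sk \<theta> (b-1)"
  define Pk where "Pk k = (\<Prod>\<nu>\<in>{b..<k}. (1 - dlt \<theta> \<nu> * a))" for k
  define \<Phi> where "\<Phi> k x = exp (- a * (sg \<theta> k x - s0)) * Pk k" for k x
  have fac_nz: "1 - dlt \<theta> \<nu> * a \<noteq> 0" for \<nu> using C1'[of \<nu>] by simp
  have Pk_nz: "Pk k \<noteq> 0" for k unfolding Pk_def using fac_nz by (simp add: prod_zero_iff)
  have Phi_form: "\<Phi> k x = (exp (- a * (sk \<theta> k - \<theta> (2*k) - s0)) * Pk k) * exp (- a * x)" for k x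
  proof -
    have "exp (- a * (sg \<theta> k x - s0)) = exp (- a * (sk \<theta> k - \<theta> (2*k) - s0)) * exp (- a * x)"
      unfolding sg_def mult_exp_exp by (rule arg_cong[of _ _ exp]) (simp add: algebra_simps)
    then show ?thesis unfolding \<Phi>_def by simp
  qed
  have C_nz: "exp (- a * (sk \<theta> k - \<theta> (2*k) - s0)) * Pk k \<noteq> 0" for k using Pk_nz by simp
  have Phi_nz: "\<Phi> k x \<noteq> 0" for k x unfolding \<Phi>_def using Pk_nz by simp
  have W: "((\<lambda>\<tau>. g k \<tau> / \<Phi> k \<tau>) has_integral (y t / \<Phi> k t - y (\<theta> (2*k-1)) / \<Phi> k (\<theta> (2*k-1)))) {\<theta> (2*k-1)..t}"
    if "b \<le> k" "k \<le> k1" "t \<in> {\<theta> (2*k-1)..\<theta> (2*k)}" for k t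
    unfolding Phi_form
    by (rule ftc_lin[of "\<theta> (2*k-1)" t "\<theta> (2*k)" y a "g k"]) (use that deriv C_nz in auto)
  define J where "J l = integral {\<theta> (2*l-1)..\<theta> (2*l)} (\<lambda>\<tau>. g l \<tau> / \<Phi> l \<tau>)
                     + dlt \<theta> l * g l (\<theta> (2*l)) / \<Phi> (l+1) (\<theta> (2*l+1))" for l
  have Phib: "\<Phi> b (\<theta> (2*b-1)) = 1" unfolding \<Phi>_def Pk_def s0_def using sg_left by simp
  have Phijump: "\<Phi> (k+1) (\<theta> (2*k+1)) = (1 - dlt \<theta> k * a) * \<Phi> k (\<theta> (2*k))" if "b \<le> k" for k
    unfolding \<Phi>_def Pk_def using sg_next[of k] sg_right[of k] int_prod_last[OF that, of "\<lambda>\<nu>. 1 - dlt \<theta> \<nu> * a"]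
    by simp
  have Z: "k \<le> k1 \<longrightarrow> (\<forall>t\<in>{\<theta> (2*k-1)..\<theta> (2*k)}. y t / \<Phi> k t = y (\<theta> (2*b-1)) + (\<Sum>l\<in>{b..<k}. J l)
              + integral {\<theta> (2*k-1)..t} (\<lambda>\<tau>. g k \<tau> / \<Phi> k \<tau>))" if "b \<le> k" for k
    using that
  proof (induction k rule: int_ge_induct)
    case base
    show ?case
    proof (intro impI ballI)
      fix t assume "b \<le> k1" "t \<in> {\<theta> (2*b-1)..\<theta> (2*b)}"
      then have "integral {\<theta> (2*b-1)..t} (\<lambda>\<tau>. g b \<tau> / \<Phi> b \<tau>) = y t / \<Phi> b t - y (\<theta> (2*b-1)) / \<Phi> b (\<theta> (2*b-1))"
        using W[of b t] by (intro integral_unique) simp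
      then show "y t / \<Phi> b t = y (\<theta> (2*b-1)) + (\<Sum>l\<in>{b..<b}. J l) + integral {\<theta> (2*b-1)..t} (\<lambda>\<tau>. g b \<tau> / \<Phi> b \<tau>)"
        using Phib by simp
    qed
  next
    case (step i)
    have e1: "2*(i+1)-1 = 2*i+1" by simp
    show ?case unfolding e1
    proof (intro impI ballI)
      fix t assume i1: "i + 1 \<le> k1" and t: "t \<in> {\<theta> (2*i+1)..\<theta> (2*(i+1))}"
      have "integral {\<theta> (2*i+1)..t} (\<lambda>\<tau>. g (i+1) \<tau> / \<Phi> (i+1) \<tau>)
              = y t / \<Phi> (i+1) t - y (\<theta> (2*i+1)) / \<Phi> (i+1) (\<theta> (2*i+1))"
        using W[of "i+1" t] step.hyps i1 t unfolding e1 by (intro integral_unique) simp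
      moreover have "y (\<theta> (2*i+1)) / \<Phi> (i+1) (\<theta> (2*i+1))
              = y (\<theta> (2*i)) / \<Phi> i (\<theta> (2*i)) + dlt \<theta> i * g i (\<theta> (2*i)) / \<Phi> (i+1) (\<theta> (2*i+1))"
      proof -
        have "y (\<theta> (2*i+1)) = (1 - dlt \<theta> i * a) * y (\<theta> (2*i)) + dlt \<theta> i * g i (\<theta> (2*i))"
          using jump[of i] step.hyps i1 by simp
        then show ?thesis unfolding Phijump[OF step.hyps] using frac_aux[OF fac_nz[of i]]
          by simp
      qed
      moreover have "y (\<theta> (2*i)) / \<Phi> i (\<theta> (2*i)) = y (\<theta> (2*b-1)) + (\<Sum>l\<in>{b..<i}. J l)
              + integral {\<theta> (2*i-1)..\<theta> (2*i)} (\<lambda>\<tau>. g i \<tau> / \<Phi> i \<tau>)"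
        using step.IH i1 th_le[of "2*i-1" "2*i"] by auto
      moreover have "(\<Sum>l\<in>{b..<i+1}. J l) = (\<Sum>l\<in>{b..<i}. J l) + J i"
        by (rule int_sum_last[OF step.hyps])
      ultimately show "y t / \<Phi> (i+1) t = y (\<theta> (2*b-1)) + (\<Sum>l\<in>{b..<i+1}. J l)
              + integral {\<theta> (2*i+1)..t} (\<lambda>\<tau>. g (i+1) \<tau> / \<Phi> (i+1) \<tau>)"
        unfolding J_def by simp
    qed
  qed
  define S where "S = sg \<theta> k t"
  have Sb: "sk \<theta> (k-1) \<le> S" "S \<le> sk \<theta> k" unfolding S_def using sg_bounds[OF kt(3)] by auto
  have S0: "s0 \<le> sk \<theta> (k-1)" unfolding s0_def using kt(1) by (intro sk_le) simp
  have ratio: "\<bar>\<Phi> k t / \<Phi> l \<tau>\<bar> \<le> Kc * exp (- lm * (S - sg \<theta> l \<tau>))"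
    if l: "b \<le> l" "l \<le> k" "\<tau> \<in> {\<theta> (2*l-1)..\<theta> (2*l)}" "l < k \<or> \<tau> \<le> t" for l \<tau>
  proof -
    have "Pk k = Pk l * (\<Prod>\<nu>\<in>{l..<k}. (1 - dlt \<theta> \<nu> * a))"
      unfolding Pk_def by (rule int_prod_split) (use l in auto)
    moreover have "exp (- a * (S - s0)) / exp (- a * (sg \<theta> l \<tau> - s0)) = exp (- a * (S - sg \<theta> l \<tau>))"
      unfolding exp_diff[symmetric] by (rule arg_cong[of _ _ exp]) (simp add: algebra_simps)
    ultimately have eq: "\<Phi> k t / \<Phi> l \<tau> = exp (- a * (S - sg \<theta> l \<tau>)) * (\<Prod>\<nu>\<in>{l..<k}. (1 - dlt \<theta> \<nu> * a))"
      unfolding \<Phi>_def S_def using Pk_nz[of l] by (simp add: field_simps)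
    have tb: "sk \<theta> (l-1) \<le> sg \<theta> l \<tau>" "sg \<theta> l \<tau> \<le> sk \<theta> l" using sg_bounds[OF l(3)] by auto
    have D0: "0 \<le> S - sg \<theta> l \<tau>"
    proof (cases "l < k")
      case True then have "sk \<theta> l \<le> sk \<theta> (k-1)" by (intro sk_le) simp
      then show ?thesis using Sb tb by simp
    next
      case False then have "l = k" "\<tau> \<le> t" using l by auto
      then show ?thesis unfolding S_def sg_def by simp
    qed
    have "\<bar>\<Prod>\<nu>\<in>{l..<k}. (1 - dlt \<theta> \<nu> * a)\<bar> * exp (- a * (S - sg \<theta> l \<tau>)) \<le> Kc * exp (- lm * (S - sg \<theta> l \<tau>))"
      by (rule kern) (use l D0 Sb tb in auto)
    then show ?thesis unfolding eq by (simp add: abs_mult mult.commute)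
  qed
  define hh where "hh u = Kc * exp (- lm * (S - u)) * (c1 * exp (- \<mu> * (u - s0)) + c2)" for u
  define FF where "FF u = Kc * c1 * exp (- \<mu> * (S - s0)) * exp (- (lm - \<mu>) * (S - u)) / (lm - \<mu>)
                        + Kc * c2 * exp (- lm * (S - u)) / lm" for u
  have lm0: "0 < lm" "0 < lm - \<mu>" using mu by auto
  have hh_eq: "hh u = Kc * c1 * exp (- \<mu> * (S - s0)) * exp (- (lm - \<mu>) * (S - u)) + Kc * c2 * exp (- lm * (S - u))" for u
  proof -
    have "exp (- lm * (S - u)) * exp (- \<mu> * (u - s0)) = exp (- \<mu> * (S - s0)) * exp (- (lm - \<mu>) * (S - u))"
      unfolding mult_exp_exp by (rule arg_cong[of _ _ exp]) (simp add: algebra_simps)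
    then show ?thesis unfolding hh_def by (simp add: algebra_simps)
  qed
  have FF_deriv: "(FF has_real_derivative hh u) (at u)" for u
  proof -
    have ne: "lm - \<mu> \<noteq> 0" "lm \<noteq> 0" using lm0 by auto
    have e1: "((\<lambda>u. exp (- (lm - \<mu>) * (S - u))) has_real_derivative exp (- (lm - \<mu>) * (S - u)) * (lm - \<mu>)) (at u)"
      by (auto intro!: derivative_eq_intros simp: algebra_simps)
    have e2: "((\<lambda>u. exp (- lm * (S - u))) has_real_derivative exp (- lm * (S - u)) * lm) (at u)"
      by (auto intro!: derivative_eq_intros simp: algebra_simps)
    have "(FF has_real_derivative
       (Kc * c1 * exp (- \<mu> * (S - s0)) * (exp (- (lm - \<mu>) * (S - u)) * (lm - \<mu>)) / (lm - \<mu>)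
        + Kc * c2 * (exp (- lm * (S - u)) * lm) / lm)) (at u)"
      unfolding FF_def by (intro DERIV_add DERIV_cdivide DERIV_cmult e1 e2)
    moreover have "Kc * c1 * exp (- \<mu> * (S - s0)) * (exp (- (lm - \<mu>) * (S - u)) * (lm - \<mu>)) / (lm - \<mu>)
        + Kc * c2 * (exp (- lm * (S - u)) * lm) / lm = hh u"
      unfolding hh_eq using ne by simp
    ultimately show ?thesis by simp
  qed
  have FF_int: "((\<lambda>\<tau>. hh (sg \<theta> l \<tau>)) has_integral (FF (sg \<theta> l x) - FF (sk \<theta> (l-1)))) {\<theta> (2*l-1)..x}"
    if x: "x \<in> {\<theta> (2*l-1)..\<theta> (2*l)}" for l x
  proof -
    have d: "((\<lambda>\<tau>. FF (sg \<theta> l \<tau>)) has_vector_derivative hh (sg \<theta> l \<tau>)) (at \<tau> within {\<theta> (2*l-1)..x})" for \<tau>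
    proof -
      have s: "(sg \<theta> l has_real_derivative 1) (at \<tau> within {\<theta> (2*l-1)..x})"
        unfolding sg_def[abs_def] by (auto intro!: derivative_eq_intros)
      have "((\<lambda>\<tau>. FF (sg \<theta> l \<tau>)) has_real_derivative hh (sg \<theta> l \<tau>) * 1) (at \<tau> within {\<theta> (2*l-1)..x})"
        by (rule DERIV_chain2[OF FF_deriv s])
      then show ?thesis by (simp add: has_real_derivative_iff_has_vector_derivative)
    qed
    have "((\<lambda>\<tau>. hh (sg \<theta> l \<tau>)) has_integral (FF (sg \<theta> l x) - FF (sg \<theta> l (\<theta> (2*l-1))))) {\<theta> (2*l-1)..x}"
      by (rule fundamental_theorem_of_calculus) (use x d in auto)
    then show ?thesis using sg_left by simp
  qed
  have FF_nonneg: "0 \<le> FF u" for u unfolding FF_def using lm0 c Kc by (intro add_nonneg_nonneg divide_nonneg_pos) auto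
  have FF_S: "FF S = Kc * c1 * exp (- \<mu> * (S - s0)) / (lm - \<mu>) + Kc * c2 / lm" unfolding FF_def by simp
  have gbound: "\<bar>\<Phi> k t * (g l \<tau> / \<Phi> l \<tau>)\<bar> \<le> hh (sg \<theta> l \<tau>)"
    if l: "b \<le> l" "l \<le> k" "\<tau> \<in> {\<theta> (2*l-1)..\<theta> (2*l)}" "l < k \<or> \<tau> \<le> t" for l \<tau>
  proof -
    have "\<bar>\<Phi> k t * (g l \<tau> / \<Phi> l \<tau>)\<bar> = \<bar>\<Phi> k t / \<Phi> l \<tau>\<bar> * \<bar>g l \<tau>\<bar>" by (simp add: abs_mult)
    also have "\<dots> \<le> (Kc * exp (- lm * (S - sg \<theta> l \<tau>))) * (c1 * exp (- \<mu> * (sg \<theta> l \<tau> - s0)) + c2)"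
      using ratio[OF l] gb[of l \<tau>] l kt Kc unfolding s0_def by (intro mult_mono) auto
    finally show ?thesis unfolding hh_def .
  qed
  have intbound: "\<bar>\<Phi> k t\<bar> * \<bar>integral {\<theta> (2*l-1)..\<theta> (2*l)} (\<lambda>\<tau>. g l \<tau> / \<Phi> l \<tau>)\<bar> \<le> FF (sk \<theta> l) - FF (sk \<theta> (l-1))"
    if l: "b \<le> l" "l < k" for l
  proof -
    have lI: "\<theta> (2*l) \<in> {\<theta> (2*l-1)..\<theta> (2*l)}" using th_le[of "2*l-1" "2*l"] by simp
    have hI: "((\<lambda>\<tau>. g l \<tau> / \<Phi> l \<tau>) has_integral integral {\<theta> (2*l-1)..\<theta> (2*l)} (\<lambda>\<tau>. g l \<tau> / \<Phi> l \<tau>)) {\<theta> (2*l-1)..\<theta> (2*l)}"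
      using W[OF l(1) _ lI] l kt by (intro integrable_integral) (auto intro: has_integral_integrable)
    show ?thesis
      by (rule int_abs_bound[OF hI FF_int[OF lI, unfolded sg_right]]) (use gbound l in auto)
  qed
  have partbound: "\<bar>\<Phi> k t\<bar> * \<bar>integral {\<theta> (2*k-1)..t} (\<lambda>\<tau>. g k \<tau> / \<Phi> k \<tau>)\<bar> \<le> FF S - FF (sk \<theta> (k-1))"
  proof -
    have hI: "((\<lambda>\<tau>. g k \<tau> / \<Phi> k \<tau>) has_integral integral {\<theta> (2*k-1)..t} (\<lambda>\<tau>. g k \<tau> / \<Phi> k \<tau>)) {\<theta> (2*k-1)..t}"
      using W[OF kt] by (intro integrable_integral) (auto intro: has_integral_integrable)
    show ?thesis
      by (rule int_abs_bound[OF hI FF_int[OF kt(3), folded S_def]]) (use gbound kt in auto)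
  qed
  have jumpbound: "\<bar>\<Phi> k t\<bar> * \<bar>dlt \<theta> l * g l (\<theta> (2*l)) / \<Phi> (l+1) (\<theta> (2*l+1))\<bar> \<le> dlt \<theta> l * hh (sk \<theta> l)"
    if l: "b \<le> l" "l < k" for l
  proof -
    have e1: "2*(l+1)-1 = 2*l+1" by simp
    have m: "\<theta> (2*l+1) \<in> {\<theta> (2*(l+1)-1)..\<theta> (2*(l+1))}" unfolding e1 using th_le[of "2*l+1" "2*(l+1)"] by simp
    have "l + 1 < k \<or> \<theta> (2*l+1) \<le> t"
    proof (cases "l + 1 < k")
      case False then have "k = l + 1" using l by simp
      then show ?thesis using kt(3) e1 by (simp add: add.commute)
    qed simp
    then have r: "\<bar>\<Phi> k t / \<Phi> (l+1) (\<theta> (2*l+1))\<bar> \<le> Kc * exp (- lm * (S - sk \<theta> l))"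
      using ratio[OF _ _ m] l sg_next[of l] by simp
    have lI: "\<theta> (2*l) \<in> {\<theta> (2*l-1)..\<theta> (2*l)}" using th_le[of "2*l-1" "2*l"] by simp
    have gg: "\<bar>g l (\<theta> (2*l))\<bar> \<le> c1 * exp (- \<mu> * (sk \<theta> l - s0)) + c2"
      using gb[OF l(1) _ lI] l kt sg_right[of l] unfolding s0_def by simp
    have "\<bar>\<Phi> k t\<bar> * \<bar>dlt \<theta> l * g l (\<theta> (2*l)) / \<Phi> (l+1) (\<theta> (2*l+1))\<bar>
          = dlt \<theta> l * (\<bar>\<Phi> k t / \<Phi> (l+1) (\<theta> (2*l+1))\<bar> * \<bar>g l (\<theta> (2*l))\<bar>)"
      using dlt_pos[of l] by (simp add: abs_mult abs_divide)
    also have "\<dots> \<le> dlt \<theta> l * ((Kc * exp (- lm * (S - sk \<theta> l))) * (c1 * exp (- \<mu> * (sk \<theta> l - s0)) + c2))"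
      using r gg dlt_pos[of l] Kc by (intro mult_left_mono mult_mono) auto
    finally show ?thesis unfolding hh_def .
  qed
  have bI: "\<theta> (2*b-1) \<in> {\<theta> (2*b-1)..\<theta> (2*b)}" using th_le[of "2*b-1" "2*b"] by simp
  have y0bound: "\<bar>\<Phi> k t\<bar> \<le> Kc * exp (- lm * (S - s0))"
  proof -
    have "b < k \<or> \<theta> (2*b-1) \<le> t"
    proof (cases "b < k")
      case False then have "k = b" using kt by simp
      then show ?thesis using kt(3) by simp
    qed simp
    then show ?thesis using ratio[OF _ kt(1) bI] Phib sg_left[of b] unfolding s0_def by simp
  qed
  define y0 where "y0 = y (\<theta> (2*b-1))"
  define IP where "IP = integral {\<theta> (2*k-1)..t} (\<lambda>\<tau>. g k \<tau> / \<Phi> k \<tau>)"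
  have "y t / \<Phi> k t = y0 + (\<Sum>l\<in>{b..<k}. J l) + IP"
    using Z[OF kt(1)] kt unfolding y0_def IP_def by blast
  then have yt: "y t = \<Phi> k t * (y0 + (\<Sum>l\<in>{b..<k}. J l) + IP)"
    using Phi_nz[of k t] by (simp add: field_simps)
  have Jb: "\<bar>\<Phi> k t\<bar> * \<bar>J l\<bar> \<le> (FF (sk \<theta> l) - FF (sk \<theta> (l-1))) + dlt \<theta> l * hh (sk \<theta> l)"
    if "l \<in> {b..<k}" for l
  proof -
    have l: "b \<le> l" "l < k" using that by auto
    have "\<bar>J l\<bar> \<le> \<bar>integral {\<theta> (2*l-1)..\<theta> (2*l)} (\<lambda>\<tau>. g l \<tau> / \<Phi> l \<tau>)\<bar>
          + \<bar>dlt \<theta> l * g l (\<theta> (2*l)) / \<Phi> (l+1) (\<theta> (2*l+1))\<bar>" unfolding J_def by (rule abs_triangle_ineq)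
    then have "\<bar>\<Phi> k t\<bar> * \<bar>J l\<bar> \<le> \<bar>\<Phi> k t\<bar> * (\<bar>integral {\<theta> (2*l-1)..\<theta> (2*l)} (\<lambda>\<tau>. g l \<tau> / \<Phi> l \<tau>)\<bar>
          + \<bar>dlt \<theta> l * g l (\<theta> (2*l)) / \<Phi> (l+1) (\<theta> (2*l+1))\<bar>)"
      by (rule mult_left_mono) simp
    then show ?thesis unfolding distrib_left using intbound[OF l] jumpbound[OF l] by linarith
  qed
  have sb: "(\<Sum>l\<in>{b..<k}. \<bar>\<Phi> k t\<bar> * \<bar>J l\<bar>)
      \<le> (\<Sum>l\<in>{b..<k}. (FF (sk \<theta> l) - FF (sk \<theta> (l-1))) + dlt \<theta> l * hh (sk \<theta> l))"
    by (rule sum_mono) (rule Jb)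
  have "\<bar>y t\<bar> \<le> \<bar>\<Phi> k t\<bar> * (\<bar>y0\<bar> + (\<Sum>l\<in>{b..<k}. \<bar>J l\<bar>) + \<bar>IP\<bar>)"
  proof -
    have "\<bar>y0 + (\<Sum>l\<in>{b..<k}. J l) + IP\<bar> \<le> \<bar>y0\<bar> + (\<Sum>l\<in>{b..<k}. \<bar>J l\<bar>) + \<bar>IP\<bar>"
      using sum_abs[of J "{b..<k}"] abs_triangle_ineq[of y0 "\<Sum>l\<in>{b..<k}. J l"] abs_triangle_ineq[of "y0 + (\<Sum>l\<in>{b..<k}. J l)" IP]
      by linarith
    then show ?thesis unfolding yt abs_mult by (intro mult_left_mono) auto
  qed
  also have "\<dots> = \<bar>\<Phi> k t\<bar> * \<bar>y0\<bar> + (\<Sum>l\<in>{b..<k}. \<bar>\<Phi> k t\<bar> * \<bar>J l\<bar>) + \<bar>\<Phi> k t\<bar> * \<bar>IP\<bar>"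
    by (simp add: distrib_left sum_distrib_left)
  also have "\<dots> \<le> Kc * exp (- lm * (S - s0)) * \<bar>y0\<bar>
        + (\<Sum>l\<in>{b..<k}. (FF (sk \<theta> l) - FF (sk \<theta> (l-1))) + dlt \<theta> l * hh (sk \<theta> l))
        + (FF S - FF (sk \<theta> (k-1)))"
    using y0bound sb partbound unfolding IP_def
    by (intro add_mono mult_right_mono) auto
  also have "(\<Sum>l\<in>{b..<k}. (FF (sk \<theta> l) - FF (sk \<theta> (l-1))) + dlt \<theta> l * hh (sk \<theta> l))
      = FF (sk \<theta> (k-1)) - FF s0 + (\<Sum>l\<in>{b..<k}. dlt \<theta> l * hh (sk \<theta> l))"
    unfolding sum.distrib s0_def using int_telescope[OF kt(1), of "\<lambda>l. FF (sk \<theta> l)"] by simp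
  finally have y1: "\<bar>y t\<bar> \<le> Kc * exp (- lm * (S - s0)) * \<bar>y0\<bar> + FF S + (\<Sum>l\<in>{b..<k}. dlt \<theta> l * hh (sk \<theta> l))"
    using FF_nonneg[of s0] by linarith
  define A1 where "A1 = (\<Sum>l\<in>{b..<k}. dlt \<theta> l * exp (- (lm - \<mu>) * (S - sk \<theta> l)))"
  define A2 where "A2 = (\<Sum>l\<in>{b..<k}. dlt \<theta> l * exp (- lm * (S - sk \<theta> l)))"
  have A1b: "A1 \<le> real p * dmax \<theta> p / (1 - exp (- (lm - \<mu>) * psi_om \<theta> p))"
    unfolding A1_def by (rule jump_sum) (use lm0 kt Sb in auto)
  have A2b: "A2 \<le> real p * dmax \<theta> p / (1 - exp (- lm * psi_om \<theta> p))"
    unfolding A2_def by (rule jump_sum) (use lm0 kt Sb in auto)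
  have sumhh: "(\<Sum>l\<in>{b..<k}. dlt \<theta> l * hh (sk \<theta> l)) = Kc * c1 * exp (- \<mu> * (S - s0)) * A1 + Kc * c2 * A2"
  proof -
    have e: "dlt \<theta> l * hh (sk \<theta> l) = (Kc * c1 * exp (- \<mu> * (S - s0))) * (dlt \<theta> l * exp (- (lm - \<mu>) * (S - sk \<theta> l)))
              + (Kc * c2) * (dlt \<theta> l * exp (- lm * (S - sk \<theta> l)))" for l
      unfolding hh_eq by (simp add: algebra_simps)
    show ?thesis unfolding e sum.distrib A1_def A2_def by (simp add: sum_distrib_left)
  qed
  define Em where "Em = exp (- \<mu> * (S - s0))"
  have Em0: "0 \<le> Em" unfolding Em_def by simp
  have m1: "Kc * c1 * Em * A1 \<le> Kc * c1 * Em * (real p * dmax \<theta> p / (1 - exp (- (lm - \<mu>) * psi_om \<theta> p)))"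
    using A1b Kc c Em0 by (intro mult_left_mono) auto
  have m2: "Kc * c2 * A2 \<le> Kc * c2 * (real p * dmax \<theta> p / (1 - exp (- lm * psi_om \<theta> p)))"
    using A2b Kc c by (intro mult_left_mono) auto
  have y2: "\<bar>y t\<bar> \<le> Kc * exp (- lm * (S - s0)) * \<bar>y0\<bar> + c1 * Em * kf \<theta> p Kc (lm - \<mu>) + c2 * kf \<theta> p Kc lm"
  proof -
    have ne: "lm - \<mu> \<noteq> 0" "lm \<noteq> 0" using lm0 by auto
    have k1: "c1 * Em * kf \<theta> p Kc (lm - \<mu>) = Kc * c1 * Em / (lm - \<mu>)
        + Kc * c1 * Em * (real p * dmax \<theta> p / (1 - exp (- (lm - \<mu>) * psi_om \<theta> p)))"
      unfolding kf_def by (simp add: distrib_left mult_ac)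
    have k2: "c2 * kf \<theta> p Kc lm = Kc * c2 / lm
        + Kc * c2 * (real p * dmax \<theta> p / (1 - exp (- lm * psi_om \<theta> p)))"
      unfolding kf_def by (simp add: distrib_left mult_ac)
    have fs: "FF S = Kc * c1 * Em / (lm - \<mu>) + Kc * c2 / lm" unfolding FF_S Em_def by simp
    show ?thesis using y1 m1 m2 unfolding sumhh fs k1 k2 Em_def[symmetric] by linarith
  qed
  define E where "E = exp (\<mu> * (S - s0))"
  have EE: "E * Em = 1" unfolding E_def Em_def by (simp add: exp_minus[symmetric] mult_exp_exp)
  have Ee: "E * exp (- lm * (S - s0)) \<le> 1"
  proof -
    have "E * exp (- lm * (S - s0)) = exp (- (lm - \<mu>) * (S - s0))"
      unfolding E_def mult_exp_exp by (rule arg_cong[of _ _ exp]) (simp add: algebra_simps)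
    also have "\<dots> \<le> 1" using lm0 Sb S0 by (simp add: mult_nonpos_nonneg)
    finally show ?thesis .
  qed
  have E0: "0 \<le> E" unfolding E_def by simp
  have "E * \<bar>y t\<bar> \<le> E * (Kc * exp (- lm * (S - s0)) * \<bar>y0\<bar> + c1 * Em * kf \<theta> p Kc (lm - \<mu>) + c2 * kf \<theta> p Kc lm)"
    using y2 E0 by (rule mult_left_mono)
  also have "\<dots> = Kc * (E * exp (- lm * (S - s0))) * \<bar>y0\<bar> + c1 * (E * Em) * kf \<theta> p Kc (lm - \<mu>) + c2 * E * kf \<theta> p Kc lm"
    by (simp add: algebra_simps)
  also have "\<dots> \<le> Kc * 1 * \<bar>y0\<bar> + c1 * (E * Em) * kf \<theta> p Kc (lm - \<mu>) + c2 * E * kf \<theta> p Kc lm"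
    using mult_right_mono[OF mult_left_mono[OF Ee Kc] abs_ge_zero[of y0]] by linarith
  finally have fin: "E * \<bar>y t\<bar> \<le> Kc * 1 * \<bar>y0\<bar> + c1 * (E * Em) * kf \<theta> p Kc (lm - \<mu>) + c2 * E * kf \<theta> p Kc lm" .
  then show ?thesis unfolding EE unfolding E_def S_def s0_def y0_def by simp
qed

end



lemma funpow_cont:
  assumes "continuous_on L F" "F ` L \<subseteq> L"
  shows "continuous_on L (F ^^ j) \<and> (F ^^ j) ` L \<subseteq> L"
proof (induction j)
  case 0 then show ?case by (simp add: continuous_on_id)
next
  case (Suc j)
  then have "continuous_on L (F \<circ> (F ^^ j))"
    by (intro continuous_on_compose) (auto intro: continuous_on_subset[OF assms(1)])
  moreover have "(F \<circ> (F ^^ j)) ` L \<subseteq> L" using Suc assms(2) by auto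
  ultimately show ?case by simp
qed

lemma finite_idxset: "finite (idxset m n)" unfolding idxset_def by simp

lemma input_close:
  fixes L :: "vec set" and F :: "vec \<Rightarrow> vec"
  assumes L: "compact L" "L \<subseteq> Rmn m n" "continuous_on L F" "F ` L \<subseteq> L" and eta: "0 < \<eta>"
  shows "\<exists>\<delta>>0. \<forall>u\<in>L. \<forall>v\<in>L. (\<forall>q\<in>idxset m n. \<bar>u q - v q\<bar> < \<delta>) \<longrightarrow>
           (\<forall>j\<le>N. \<forall>q\<in>idxset m n. \<bar>(F ^^ j) u q - (F ^^ j) v q\<bar> < \<eta>)"
proof -
  define I where "I = idxset m n"
  have fI: "finite I" unfolding I_def by (rule finite_idxset)
  define \<Gamma> where "\<Gamma> z = (\<Sum>j<Suc N. \<Sum>q\<in>I. \<bar>(F ^^ j) (fst z) q - (F ^^ j) (snd z) q\<bar>)" for z :: "vec \<times> vec"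
  define \<Psi> where "\<Psi> z = (\<Sum>q\<in>I. \<bar>fst z q - snd z q\<bar>)" for z :: "vec \<times> vec"
  have coord: "continuous_on (L \<times> L) (\<lambda>z. (F ^^ j) (h z) q)"
    if h: "continuous_on (L \<times> L) h" "h ` (L \<times> L) \<subseteq> L" for j q h
  proof -
    have "continuous_on (L \<times> L) ((F ^^ j) \<circ> h)"
      using funpow_cont[OF L(3,4), of j] h by (intro continuous_on_compose) (auto intro: continuous_on_subset)
    then have "continuous_on (L \<times> L) (\<lambda>z. ((F ^^ j) \<circ> h) z q)"
      by (rule continuous_on_product_then_coordinatewise)
    then show ?thesis by (simp add: comp_def)
  qed
  have cfst: "continuous_on (L \<times> L) fst" "fst ` (L \<times> L) \<subseteq> L" by (auto intro: continuous_on_fst continuous_on_id)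
  have csnd: "continuous_on (L \<times> L) snd" "snd ` (L \<times> L) \<subseteq> L" by (auto intro: continuous_on_snd continuous_on_id)
  have cG: "continuous_on (L \<times> L) \<Gamma>"
    unfolding \<Gamma>_def using coord[OF cfst] coord[OF csnd] by (intro continuous_intros) auto
  have cP: "continuous_on (L \<times> L) \<Psi>"
    unfolding \<Psi>_def using coord[OF cfst, of 0] coord[OF csnd, of 0] by (intro continuous_intros) auto
  define SS where "SS = (L \<times> L) \<inter> \<Gamma> -` {\<eta>..}"
  have cSS: "compact SS" unfolding SS_def
    by (rule closedin_compact[OF compact_Times[OF L(1) L(1)] continuous_closedin_preimage[OF cG]]) simp
  have keyP: "0 < \<Psi> z" if z: "z \<in> SS" for z
  proof (rule ccontr)
    assume "\<not> 0 < \<Psi> z"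
    moreover have "0 \<le> \<Psi> z" unfolding \<Psi>_def by (rule sum_nonneg) simp
    ultimately have "\<Psi> z = 0" by linarith
    then have "\<forall>q\<in>I. \<bar>fst z q - snd z q\<bar> = 0" unfolding \<Psi>_def using fI by (subst (asm) sum_nonneg_eq_0_iff) auto
    moreover have "fst z \<in> Rmn m n" "snd z \<in> Rmn m n" using z L(2) unfolding SS_def by auto
    ultimately have "fst z = snd z" unfolding Rmn_def I_def by (auto intro!: ext)
    then have "\<Gamma> z = 0" unfolding \<Gamma>_def by simp
    then show False using z eta unfolding SS_def by simp
  qed
  show ?thesis
  proof (cases "SS = {}")
    case True
    show ?thesis
    proof (intro exI[of _ 1] conjI ballI impI allI)
      fix u v j q assume uv: "u \<in> L" "v \<in> L" "j \<le> N" "q \<in> idxset m n"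
      then have "\<Gamma> (u, v) < \<eta>" using True unfolding SS_def by auto
      moreover have "\<bar>(F ^^ j) u q - (F ^^ j) v q\<bar> \<le> \<Gamma> (u, v)"
      proof -
        have "\<bar>(F ^^ j) u q - (F ^^ j) v q\<bar> \<le> (\<Sum>q\<in>I. \<bar>(F ^^ j) u q - (F ^^ j) v q\<bar>)"
          using uv fI unfolding I_def by (intro member_le_sum) auto
        also have "\<dots> \<le> \<Gamma> (u, v)" unfolding \<Gamma>_def fst_conv snd_conv
          by (rule member_le_sum[of j "{..<Suc N}" "\<lambda>j. \<Sum>q\<in>I. \<bar>(F ^^ j) u q - (F ^^ j) v q\<bar>"])
             (use uv in \<open>auto intro: sum_nonneg\<close>)
        finally show ?thesis .
      qed
      ultimately show "\<bar>(F ^^ j) u q - (F ^^ j) v q\<bar> < \<eta>" by simp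
    qed simp
  next
    case False
    obtain z0 where z0: "z0 \<in> SS" "\<forall>z\<in>SS. \<Psi> z0 \<le> \<Psi> z"
      using continuous_attains_inf[OF cSS False continuous_on_subset[OF cP]] unfolding SS_def by auto
    define d where "d = \<Psi> z0 / (real (card I) + 1)"
    have d0: "0 < d" unfolding d_def using keyP[OF z0(1)] by simp
    show ?thesis
    proof (intro exI[of _ d] conjI ballI impI allI)
      fix u v j q assume uv: "u \<in> L" "v \<in> L" "\<forall>q\<in>idxset m n. \<bar>u q - v q\<bar> < d" "j \<le> N" "q \<in> idxset m n"
      have "\<Psi> (u, v) \<le> (\<Sum>q\<in>I. d)" unfolding \<Psi>_def using uv(3) unfolding I_def by (intro sum_mono) (auto intro: less_imp_le)
      also have "\<dots> = real (card I) * d" by simp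
      also have "\<dots> < \<Psi> z0" unfolding d_def using keyP[OF z0(1)]
        by (simp add: field_simps)
      finally have "(u, v) \<notin> SS" using z0(2) by force
      then have "\<Gamma> (u, v) < \<eta>" using uv unfolding SS_def by auto
      moreover have "\<bar>(F ^^ j) u q - (F ^^ j) v q\<bar> \<le> \<Gamma> (u, v)"
      proof -
        have "\<bar>(F ^^ j) u q - (F ^^ j) v q\<bar> \<le> (\<Sum>q\<in>I. \<bar>(F ^^ j) u q - (F ^^ j) v q\<bar>)"
          using uv fI unfolding I_def by (intro member_le_sum) auto
        also have "\<dots> \<le> \<Gamma> (u, v)" unfolding \<Gamma>_def fst_conv snd_conv
          by (rule member_le_sum[of j "{..<Suc N}" "\<lambda>j. \<Sum>q\<in>I. \<bar>(F ^^ j) u q - (F ^^ j) v q\<bar>"])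
             (use uv in \<open>auto intro: sum_nonneg\<close>)
        finally show ?thesis .
      qed
      ultimately show "\<bar>(F ^^ j) u q - (F ^^ j) v q\<bar> < \<eta>" by simp
    qed (rule d0)
  qed
qed




lemma nonlin_bound:
  fixes X Y :: vec and f :: "real \<Rightarrow> real" and Cc :: "nat \<times> nat \<Rightarrow> real"
  assumes fb: "\<And>s. \<bar>f s\<bar> \<le> Mf" and fl: "\<And>s1 s2. \<bar>f s1 - f s2\<bar> \<le> Lf * \<bar>s1 - s2\<bar>" and Lf: "0 \<le> Lf"
    and nb: "\<And>hl. hl \<in> Nb \<Longrightarrow> \<bar>X hl - Y hl\<bar> \<le> w" and xq: "\<bar>X q - Y q\<bar> \<le> w" and yq: "\<bar>Y q\<bar> \<le> H"
    and Cc: "\<And>hl. 0 \<le> Cc hl"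
  shows "\<bar>(\<Sum>hl\<in>Nb. Cc hl * f (X hl)) * X q - (\<Sum>hl\<in>Nb. Cc hl * f (Y hl)) * Y q\<bar> \<le> (Mf + H * Lf) * (\<Sum>hl\<in>Nb. Cc hl) * w"
proof -
  have eq: "(\<Sum>hl\<in>Nb. Cc hl * f (X hl)) * X q - (\<Sum>hl\<in>Nb. Cc hl * f (Y hl)) * Y q
      = (\<Sum>hl\<in>Nb. Cc hl * (f (X hl) * X q - f (Y hl) * Y q))"
  proof -
    have "(\<Sum>hl\<in>Nb. Cc hl * (f (X hl) * X q - f (Y hl) * Y q))
        = (\<Sum>hl\<in>Nb. Cc hl * f (X hl) * X q - Cc hl * f (Y hl) * Y q)"
      by (rule sum.cong) (simp_all add: algebra_simps)
    also have "\<dots> = (\<Sum>hl\<in>Nb. Cc hl * f (X hl) * X q) - (\<Sum>hl\<in>Nb. Cc hl * f (Y hl) * Y q)"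
      by (rule sum_subtractf)
    finally show ?thesis by (simp add: sum_distrib_right)
  qed
  have Mf0: "0 \<le> Mf" using fb[of 0] by (meson abs_ge_zero order_trans)
  have tm: "\<bar>f (X hl) * X q - f (Y hl) * Y q\<bar> \<le> (Mf + H * Lf) * w" if "hl \<in> Nb" for hl
  proof -
    have "f (X hl) * X q - f (Y hl) * Y q = f (X hl) * (X q - Y q) + (f (X hl) - f (Y hl)) * Y q"
      by (simp add: algebra_simps)
    then have "\<bar>f (X hl) * X q - f (Y hl) * Y q\<bar> \<le> \<bar>f (X hl)\<bar> * \<bar>X q - Y q\<bar> + \<bar>f (X hl) - f (Y hl)\<bar> * \<bar>Y q\<bar>"
      by (metis abs_mult abs_triangle_ineq)
    also have "\<dots> \<le> Mf * w + (Lf * w) * H"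
    proof (intro add_mono mult_mono)
      show "\<bar>f (X hl) - f (Y hl)\<bar> \<le> Lf * w"
        using fl[of "X hl" "Y hl"] nb[OF that] Lf by (smt (verit) mult_left_mono)
    qed (use fb xq yq Lf nb[OF that] Mf0 in auto)
    finally show ?thesis by (simp add: algebra_simps)
  qed
  have "\<bar>\<Sum>hl\<in>Nb. Cc hl * (f (X hl) * X q - f (Y hl) * Y q)\<bar> \<le> (\<Sum>hl\<in>Nb. \<bar>Cc hl * (f (X hl) * X q - f (Y hl) * Y q)\<bar>)"
    by (rule sum_abs)
  also have "\<dots> \<le> (\<Sum>hl\<in>Nb. Cc hl * ((Mf + H * Lf) * w))"
    by (rule sum_mono) (use tm Cc in \<open>auto simp: abs_mult intro: mult_left_mono\<close>)
  also have "\<dots> = (Mf + H * Lf) * (\<Sum>hl\<in>Nb. Cc hl) * w" by (simp add: sum_distrib_right sum_distrib_left mult_ac)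
  finally show ?thesis unfolding eq .
qed


theorem lemma3:
  fixes m n r p :: nat and \<theta> :: "int \<Rightarrow> real" and \<omega> :: real
    and a K :: "nat \<times> nat \<Rightarrow> real" and C :: "nat \<times> nat \<Rightarrow> nat \<times> nat \<Rightarrow> real"
    and f :: "real \<Rightarrow> real" and Mf Lf :: real
    and \<Lambda> :: "vec set" and F :: "vec \<Rightarrow> vec"
    and \<zeta> \<zeta>' :: "int \<Rightarrow> vec" and x x' :: "real \<Rightarrow> vec"
  assumes mn: "1 \<le> m" "1 \<le> n"
    and theta_mono: "strict_mono \<theta>" and theta_0: "\<theta> (-1) < 0" "0 < \<theta> 0"
    and period: "0 < \<omega>" "1 \<le> p" "\<And>k. \<theta> (k + 2 * int p) = \<theta> k + \<omega>"
    and a_pos: "\<And>q. q \<in> idxset m n \<Longrightarrow> 0 < a q"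
    and C_nonneg: "\<And>q hl. 0 \<le> C q hl"
    and f_cont: "continuous_on UNIV f"
    and Lam: "compact \<Lambda>" "\<Lambda> \<subseteq> Rmn m n" "continuous_on \<Lambda> F" "F ` \<Lambda> \<subseteq> \<Lambda>"
    and C1: "\<And>q k. q \<in> idxset m n \<Longrightarrow> dlt \<theta> k * a q \<noteq> 1"
    and C2: "0 < lammin \<theta> p m n a"
    and C3: "0 < Mf" "\<And>s. \<bar>f s\<bar> \<le> Mf"
    and C4: "0 < Lf" "\<And>s1 s2. \<bar>f s1 - f s2\<bar> \<le> Lf * \<bar>s1 - s2\<bar>"
    and K: "\<And>q. q \<in> idxset m n \<Longrightarrow> 0 < K q"
      "\<And>q s \<tau>. q \<in> idxset m n \<Longrightarrow> \<tau> \<le> s \<Longrightarrow>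
          \<bar>uf \<theta> (a q) s \<tau>\<bar> \<le> K q * exp (- lam \<theta> p (a q) * (s - \<tau>))"
    and C5: "(Mf + H0 \<theta> p m n r a C K Mf \<Lambda> F * Lf) * cbar \<theta> p m n r a C K < 1"
    and C6: "- lammin \<theta> p m n a + dbar \<theta> p m n r a C K Mf Lf \<Lambda> F
              + real p / psi_om \<theta> p * ln (1 + dmax \<theta> p * dbar \<theta> p m n r a C K Mf Lf \<Lambda> F) < 0"
    and zeta: "\<zeta> \<in> Theta \<Lambda> F" "\<zeta>' \<in> Theta \<Lambda> F"
    and liminf: "Liminf at_top (\<lambda>k::int. ereal (vnorm m n (\<zeta> k - \<zeta>' k))) = 0"
    and x: "is_sol \<theta> m n r a C f \<zeta> x"
      "\<forall>t\<in>Tzero \<theta>. vnorm m n (x t) \<le> H0 \<theta> p m n r a C K Mf \<Lambda> F"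
    and x': "is_sol \<theta> m n r a C f \<zeta>' x'"
      "\<forall>t\<in>Tzero \<theta>. vnorm m n (x' t) \<le> H0 \<theta> p m n r a C K Mf \<Lambda> F"
  shows "\<forall>\<epsilon>>0. \<forall>E::nat. \<exists>k0::int. \<forall>t \<in> {\<theta> (2*k0 - 1) .. \<theta> (2*(k0 + int E))} \<inter> Tzero \<theta>.
           vnorm m n (x t - x' t) < \<epsilon>"
proof -
  interpret ts \<theta> p \<omega> using theta_mono theta_0 period by unfold_locales auto
  define I where "I = idxset m n"
  have fI: "finite I" unfolding I_def by (rule finite_idxset)
  have neI: "(1,1) \<in> I" unfolding I_def idxset_def using mn by auto
  have vn_ge: "\<bar>v q\<bar> \<le> vnorm m n v" if "q \<in> I" for v q
    unfolding vnorm_def using that fI unfolding I_def by (intro Max_ge) auto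
  have vn_le: "vnorm m n v \<le> e" if "\<And>q. q \<in> I \<Longrightarrow> \<bar>v q\<bar> \<le> e" for v e
    unfolding vnorm_def using that fI neI unfolding I_def by (subst Max_le_iff) auto
  have vn_lt: "vnorm m n v < e" if "\<And>q. q \<in> I \<Longrightarrow> \<bar>v q\<bar> < e" for v e
    unfolding vnorm_def using that fI neI unfolding I_def by (subst Max_less_iff) auto
  have vn0: "0 \<le> vnorm m n v" for v using vn_ge[OF neI, of v] by simp
  have diffq: "(u - v) q = u q - v q" for u v :: vec and q by simp
  define H where "H = H0 \<theta> p m n r a C K Mf \<Lambda> F"
  have T0: "\<theta> 0 \<in> Tzero \<theta>" unfolding Tzero_iff using th_le[of "-1" 0]
    by (intro exI[of _ 0]) simp
  have H0: "0 \<le> H" using x(2) T0 vn0[of "x (\<theta> 0)"] unfolding H_def by fastforce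
  have xH: "\<bar>x t q\<bar> \<le> H" "\<bar>x' t q\<bar> \<le> H" if "t \<in> Tzero \<theta>" "q \<in> I" for t q
    using vn_ge[OF that(2), of "x t"] vn_ge[OF that(2), of "x' t"] x(2) x'(2) that(1) unfolding H_def by force+
  define W where "W t = vnorm m n (x t - x' t)" for t
  have Wq: "\<bar>x t q - x' t q\<bar> \<le> W t" if "q \<in> I" for t q
    using vn_ge[OF that, of "x t - x' t"] unfolding W_def by simp
  have W2H: "W t \<le> 2 * H" if "t \<in> Tzero \<theta>" for t
    unfolding W_def using xH[OF that] by (intro vn_le) (smt (verit, best) diffq)
  define Lc where "Lc = Mf + H * Lf"
  have Lc0: "0 \<le> Lc" unfolding Lc_def using C3 C4 H0 by simp
  define lq where "lq q = lam \<theta> p (a q)" for q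
  have lq0: "0 < lq q" if "q \<in> I" for q
  proof -
    have "lammin \<theta> p m n a \<le> lq q" unfolding lammin_def lq_def using that fI unfolding I_def
      by (intro Min_le) auto
    then show ?thesis using C2 by simp
  qed
  define Dq where "Dq q = Lc * csum m n r C q" for q
  have csum0: "0 \<le> csum m n r C q" for q unfolding csum_def using C_nonneg by (simp add: sum_nonneg)
  have Dq0: "0 \<le> Dq q" for q unfolding Dq_def using Lc0 csum0 by simp
  have kfac_eq: "kfac \<theta> p a K q = kf \<theta> p (K q) (lq q)" for q unfolding kfac_def kf_def lq_def by simp
  have cb: "Dq q * kf \<theta> p (K q) (lq q) < 1" if "q \<in> I" for q
  proof -
    have "kfac \<theta> p a K q * csum m n r C q \<le> cbar \<theta> p m n r a C K"
      unfolding cbar_def using that fI unfolding I_def by (intro Max_ge) auto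
    then have "Lc * (kfac \<theta> p a K q * csum m n r C q) \<le> Lc * cbar \<theta> p m n r a C K"
      using Lc0 by (rule mult_left_mono)
    then show ?thesis using C5 unfolding Dq_def kfac_eq Lc_def H_def by (simp add: mult_ac)
  qed
  have ev: "\<forall>\<^sub>F \<mu> in at_right 0. \<forall>q\<in>I. \<mu> < lq q \<and> Dq q * kf \<theta> p (K q) (lq q - \<mu>) < 1"
  proof (rule eventually_ball_finite[OF fI], intro ballI)
    fix q assume q: "q \<in> I"
    have ne: "lq q - 0 \<noteq> 0" "1 - exp (- (lq q - 0) * psi_om \<theta> p) \<noteq> 0"
      using lq0[OF q] psi_om_pos by auto
    have "((\<lambda>\<mu>. Dq q * kf \<theta> p (K q) (lq q - \<mu>)) \<longlongrightarrow> Dq q * kf \<theta> p (K q) (lq q - 0)) (at_right 0)"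
      unfolding kf_def using ne by (intro tendsto_intros) auto
    then have e1: "\<forall>\<^sub>F \<mu> in at_right 0. Dq q * kf \<theta> p (K q) (lq q - \<mu>) < 1"
      using cb[OF q] by (intro order_tendstoD(2)) auto
    have e2: "\<forall>\<^sub>F \<mu> in at_right 0. \<mu> < lq q"
      using lq0[OF q] by (intro order_tendstoD(2)[OF tendsto_ident_at]) auto
    show "\<forall>\<^sub>F \<mu> in at_right 0. \<mu> < lq q \<and> Dq q * kf \<theta> p (K q) (lq q - \<mu>) < 1"
      using eventually_conj[OF e2 e1] by simp
  qed
  then obtain bb where bb: "0 < bb" "\<And>\<mu>. 0 < \<mu> \<Longrightarrow> \<mu> < bb \<Longrightarrow> \<forall>q\<in>I. \<mu> < lq q \<and> Dq q * kf \<theta> p (K q) (lq q - \<mu>) < 1"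
    unfolding eventually_at_right_field by auto
  define \<mu> where "\<mu> = bb / 2"
  have mu0: "0 < \<mu>" using bb unfolding \<mu>_def by auto
  have muq: "\<And>q. q \<in> I \<Longrightarrow> \<mu> < lq q \<and> Dq q * kf \<theta> p (K q) (lq q - \<mu>) < 1"
    using bb(2)[of \<mu>] bb(1) unfolding \<mu>_def by auto
  define c' where "c' = Max ((\<lambda>q. Dq q * kf \<theta> p (K q) (lq q - \<mu>)) ` I)"
  have c'1: "c' < 1" unfolding c'_def using fI neI muq by (subst Max_less_iff) auto
  have c'ge: "Dq q * kf \<theta> p (K q) (lq q - \<mu>) \<le> c'" if "q \<in> I" for q
    unfolding c'_def using fI that by (intro Max_ge) auto
  define Kmax where "Kmax = Max (K ` I)"
  have Kge: "K q \<le> Kmax" if "q \<in> I" for q unfolding Kmax_def using fI that by (intro Max_ge) auto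
  have Kpos: "0 < K q" if "q \<in> I" for q using K(1) that unfolding I_def by simp
  define kfm where "kfm = Max ((\<lambda>q. kf \<theta> p (K q) (lq q)) ` I)"
  have kfge: "kf \<theta> p (K q) (lq q) \<le> kfm" if "q \<in> I" for q unfolding kfm_def using fI that by (intro Max_ge) auto
  have kfpos: "0 \<le> kf \<theta> p (K q) \<nu>" if "q \<in> I" "0 < \<nu>" for q \<nu>
  proof -
    have "exp (- \<nu> * psi_om \<theta> p) < 1" using that psi_om_pos by simp
    then show ?thesis unfolding kf_def using Kpos[OF that(1)] that dmax_pos
      by (intro add_nonneg_nonneg divide_nonneg_pos) auto
  qed
  have kfm0: "0 \<le> kfm" using kfge[OF neI] kfpos[OF neI lq0[OF neI]] by simp
  have Kmax0: "0 \<le> Kmax" using Kge[OF neI] Kpos[OF neI] by simp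
  show ?thesis
  proof (intro allI impI)
    fix \<epsilon> :: real and E :: nat assume eps: "0 < \<epsilon>"
    define Ps where "Ps = psi_om \<theta> p"
    have Ps0: "0 < Ps" unfolding Ps_def by (rule psi_om_pos)
    define A where "A = Kmax * (2*H) / (1 - c')"
    have A0: "0 \<le> A" unfolding A_def using Kmax0 H0 c'1 by simp
    obtain mm :: nat where mm: "ln (2*A/\<epsilon> + 1) / (\<mu>*Ps) < real mm" using reals_Archimedean2 by blast
    have decay: "exp (- \<mu> * (real mm * Ps)) * A < \<epsilon>/2"
    proof -
      have "ln (2*A/\<epsilon> + 1) < \<mu> * (real mm * Ps)" using mm mu0 Ps0 by (simp add: field_simps)
      moreover have pos: "0 < 2*A/\<epsilon> + 1" using A0 eps by (intro add_nonneg_pos divide_nonneg_pos) auto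
      ultimately have "2*A/\<epsilon> + 1 < exp (\<mu> * (real mm * Ps))"
        using exp_less_mono exp_ln by metis
      then have "2*A < \<epsilon> * exp (\<mu> * (real mm * Ps))" using eps by (simp add: field_simps)
      then show ?thesis by (simp add: exp_minus field_simps)
    qed
    define N where "N = p*mm + E"
    define Gr where "Gr = exp (\<mu> * (real (N+1) * Ps))"
    have Gr1: "1 \<le> Gr" unfolding Gr_def using mu0 Ps0 by simp
    define \<eta> where "\<eta> = (\<epsilon> * (1 - c') / 4) / (Gr * (kfm + 1))"
    have eta0: "0 < \<eta>" unfolding \<eta>_def using eps c'1 Gr1 kfm0 by simp
    have etab: "\<eta> * Gr * kfm / (1 - c') < \<epsilon>/2"
    proof -
      have ne: "1 - c' \<noteq> 0" "Gr \<noteq> 0" "kfm + 1 \<noteq> 0" "4 * kfm + 4 \<noteq> 0" using c'1 Gr1 kfm0 by auto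
      have ne2: "Gr * (kfm + 1) \<noteq> 0" using ne by simp
      have e: "\<eta> * Gr * (kfm + 1) = \<epsilon> * (1 - c') / 4"
        using ne2 unfolding \<eta>_def mult.assoc[of _ Gr] by simp
      have a1: "\<eta> * Gr * kfm \<le> \<eta> * Gr * (kfm + 1)" by (rule mult_left_mono) (use eta0 Gr1 in auto)
      have a2: "0 < \<epsilon> * (1 - c')" using eps c'1 by simp
      from a1 e a2 have "\<eta> * Gr * kfm < \<epsilon> * (1 - c') / 2" by linarith
      then have "\<eta> * Gr * kfm / (1 - c') < (\<epsilon> * (1 - c') / 2) / (1 - c')"
        by (rule divide_strict_right_mono) (use c'1 in auto)
      also have "\<dots> = \<epsilon> / 2" using ne(1) by (simp add: field_simps)
      finally show ?thesis .
    qed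
    obtain \<delta> where \<delta>: "0 < \<delta>" "\<forall>u\<in>\<Lambda>. \<forall>v\<in>\<Lambda>. (\<forall>q\<in>I. \<bar>u q - v q\<bar> < \<delta>) \<longrightarrow>
           (\<forall>j\<le>N. \<forall>q\<in>I. \<bar>(F ^^ j) u q - (F ^^ j) v q\<bar> < \<eta>)"
      using input_close[OF Lam eta0, of N] unfolding I_def by blast
    obtain b where b: "vnorm m n (\<zeta> b - \<zeta>' b) < \<delta>"
    proof (rule ccontr)
      assume "\<not> thesis"
      then have all: "\<forall>k. \<delta> \<le> vnorm m n (\<zeta> k - \<zeta>' k)" using that by (meson not_le)
      have "ereal \<delta> \<le> Liminf at_top (\<lambda>k::int. ereal (vnorm m n (\<zeta> k - \<zeta>' k)))"
        unfolding le_Liminf_iff using all by (auto intro!: always_eventually elim: less_le_trans)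
      then show False using liminf \<delta>(1) by simp
    qed
    have zin: "\<zeta> k \<in> \<Lambda>" "\<zeta>' k \<in> \<Lambda>" for k using zeta unfolding Theta_def by auto
    have iter: "\<zeta> (b + int j) = (F ^^ j) (\<zeta> b) \<and> \<zeta>' (b + int j) = (F ^^ j) (\<zeta>' b)" for j
    proof (induction j)
      case 0 then show ?case by simp
    next
      case (Suc j)
      have e: "b + int (Suc j) = (b + int j) + 1" by simp
      have "\<zeta> ((b + int j) + 1) = F (\<zeta> (b + int j))" "\<zeta>' ((b + int j) + 1) = F (\<zeta>' (b + int j))"
        using zeta unfolding Theta_def by auto
      then show ?case unfolding e using Suc by simp
    qed
    have close: "vnorm m n (\<zeta> k - \<zeta>' k) < \<eta>" if "b \<le> k" "k \<le> b + int N" for k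
    proof -
      define j where "j = nat (k - b)"
      have kj: "k = b + int j" "j \<le> N" using that unfolding j_def by auto
      have "\<forall>q\<in>I. \<bar>\<zeta> b q - \<zeta>' b q\<bar> < \<delta>" using b vn_ge[of _ "\<zeta> b - \<zeta>' b"] by (auto intro: le_less_trans)
      then have "\<forall>q\<in>I. \<bar>(F ^^ j) (\<zeta> b) q - (F ^^ j) (\<zeta>' b) q\<bar> < \<eta>" using \<delta>(2) zin kj(2) by blast
      then show ?thesis unfolding kj(1) using iter[of j] by (intro vn_lt) simp
    qed
    define k1 where "k1 = b + int N"
    define s0 where "s0 = sk \<theta> (b-1)"
    have TzI: "t \<in> Tzero \<theta>" if "t \<in> {\<theta> (2*k-1)..\<theta> (2*k)}" for k t unfolding Tzero_iff using that by blast
    have span: "sg \<theta> k t - s0 \<le> real (N+1) * Ps" if "k \<le> k1" "t \<in> {\<theta> (2*k-1)..\<theta> (2*k)}" for k t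
    proof -
      have "sg \<theta> k t \<le> sk \<theta> k" using sg_bounds[OF that(2)] by simp
      also have "\<dots> \<le> sk \<theta> ((b-1) + int (N+1))" using that(1) unfolding k1_def by (intro sk_le) simp
      also have "\<dots> = s0 + (\<Sum>k\<in>{(b-1)+1..(b-1)+int (N+1)}. eta \<theta> k)" using sk_shift[of "b-1" "N+1"] unfolding s0_def by simp
      also have "(\<Sum>k\<in>{(b-1)+1..(b-1)+int (N+1)}. eta \<theta> k) \<le> real (card {(b-1)+1..(b-1)+int (N+1)}) * Ps"
        by (rule sum_bounded_above) (use eta_le_psi in \<open>simp add: Ps_def\<close>)
      also have "card {(b-1)+1..(b-1)+int (N+1)} = N+1" by simp
      finally show ?thesis by simp
    qed
    have W0: "0 \<le> W t" for t unfolding W_def by (rule vn0)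
    define WS where "WS = {exp (\<mu> * (sg \<theta> k t - s0)) * W t | k t. b \<le> k \<and> k \<le> k1 \<and> t \<in> {\<theta> (2*k-1)..\<theta> (2*k)}}"
    have WSb: "z \<le> Gr * (2*H)" if zin: "z \<in> WS" for z
    proof -
      obtain k t where kt: "z = exp (\<mu> * (sg \<theta> k t - s0)) * W t" "b \<le> k" "k \<le> k1" "t \<in> {\<theta> (2*k-1)..\<theta> (2*k)}"
        using zin unfolding WS_def by blast
      have "exp (\<mu> * (sg \<theta> k t - s0)) \<le> Gr" unfolding Gr_def using span[OF kt(3,4)] mu0 by simp
      moreover have "W t \<le> 2*H" using W2H TzI[OF kt(4)] by blast
      ultimately show ?thesis unfolding kt(1) using W0[of t] Gr1 by (intro mult_mono) auto
    qed
    have bdd: "bdd_above WS" using WSb by (intro bdd_aboveI) blast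
    have bI: "\<theta> (2*b) \<in> {\<theta> (2*b-1)..\<theta> (2*b)}" using th_le[of "2*b-1" "2*b"] by simp
    have bk1: "b \<le> k1" unfolding k1_def by simp
    have bI': "\<theta> (2*b-1) \<in> {\<theta> (2*b-1)..\<theta> (2*b)}" using th_le[of "2*b-1" "2*b"] by simp
    have WSne: "exp (\<mu> * (sg \<theta> b (\<theta> (2*b)) - s0)) * W (\<theta> (2*b)) \<in> WS"
      unfolding WS_def using bI bk1 by blast
    define V where "V = Sup WS"
    have Wle: "exp (\<mu> * (sg \<theta> k t - s0)) * W t \<le> V"
      if "b \<le> k" "k \<le> k1" "t \<in> {\<theta> (2*k-1)..\<theta> (2*k)}" for k t
      unfolding V_def by (rule cSup_upper[OF _ bdd]) (use that in \<open>unfold WS_def, blast\<close>)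
    have V0: "0 \<le> V" using Wle[OF order_refl bk1 bI] W0[of "\<theta> (2*b)"]
      by (meson exp_ge_zero mult_nonneg_nonneg order_trans)
    have WV: "W t \<le> V * exp (- \<mu> * (sg \<theta> k t - s0))"
      if "b \<le> k" "k \<le> k1" "t \<in> {\<theta> (2*k-1)..\<theta> (2*k)}" for k t
    proof -
      have "exp (- \<mu> * (sg \<theta> k t - s0)) * exp (\<mu> * (sg \<theta> k t - s0)) = 1"
        by (simp add: exp_minus)
      then have "W t = exp (- \<mu> * (sg \<theta> k t - s0)) * (exp (\<mu> * (sg \<theta> k t - s0)) * W t)"
        by (simp add: mult.assoc[symmetric])
      also have "\<dots> \<le> exp (- \<mu> * (sg \<theta> k t - s0)) * V" using Wle[OF that] by (intro mult_left_mono) auto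
      finally show ?thesis by (simp add: mult.commute)
    qed
    have keyq: "exp (\<mu> * (sg \<theta> k t - s0)) * \<bar>x t q - x' t q\<bar>
        \<le> K q * (2*H) + Dq q * V * kf \<theta> p (K q) (lq q - \<mu>) + \<eta> * exp (\<mu> * (sg \<theta> k t - s0)) * kf \<theta> p (K q) (lq q)"
      if kt: "b \<le> k" "k \<le> k1" "t \<in> {\<theta> (2*k-1)..\<theta> (2*k)}" and q: "q \<in> I" for k t q
    proof -
      have qI: "q \<in> idxset m n" using q unfolding I_def .
      define gg where "gg k t = - (\<Sum>hl\<in>nbhd m n r q. C q hl * f (x t hl)) * x t q
          + (\<Sum>hl\<in>nbhd m n r q. C q hl * f (x' t hl)) * x' t q + (\<zeta> k q - \<zeta>' k q)" for k t
      have sx: "\<And>k t. t \<in> {\<theta> (2*k-1)..\<theta> (2*k)} \<Longrightarrow> ((\<lambda>s. x s q) has_real_derivative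
            (- a q * x t q - (\<Sum>hl\<in>nbhd m n r q. C q hl * f (x t hl)) * x t q + \<zeta> k q))
            (at t within {\<theta> (2*k - 1) .. \<theta> (2*k)})"
        "\<And>k. x (\<theta> (2*k + 1)) q = (1 - dlt \<theta> k * a q) * x (\<theta> (2*k)) q
         - dlt \<theta> k * (\<Sum>hl\<in>nbhd m n r q. C q hl * f (x (\<theta> (2*k)) hl)) * x (\<theta> (2*k)) q
         + dlt \<theta> k * \<zeta> k q"
        using x(1) qI unfolding is_sol_def by blast+
      have sx': "\<And>k t. t \<in> {\<theta> (2*k-1)..\<theta> (2*k)} \<Longrightarrow> ((\<lambda>s. x' s q) has_real_derivative
            (- a q * x' t q - (\<Sum>hl\<in>nbhd m n r q. C q hl * f (x' t hl)) * x' t q + \<zeta>' k q))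
            (at t within {\<theta> (2*k - 1) .. \<theta> (2*k)})"
        "\<And>k. x' (\<theta> (2*k + 1)) q = (1 - dlt \<theta> k * a q) * x' (\<theta> (2*k)) q
         - dlt \<theta> k * (\<Sum>hl\<in>nbhd m n r q. C q hl * f (x' (\<theta> (2*k)) hl)) * x' (\<theta> (2*k)) q
         + dlt \<theta> k * \<zeta>' k q"
        using x'(1) qI unfolding is_sol_def by blast+
      have apos: "0 < a q" using a_pos qI by simp
      have kern': "\<bar>\<Prod>\<nu>\<in>{l..<k}. (1 - dlt \<theta> \<nu> * a q)\<bar> * exp (- a q * D) \<le> K q * exp (- lq q * D)"
        if "l \<le> k" "0 \<le> D" "sk \<theta> (k-1) - sk \<theta> l \<le> D" "D \<le> sk \<theta> k - sk \<theta> (l-1)" for l k D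
        by (rule kernel[OF apos _ that]) (use K(2)[OF qI] in \<open>simp add: lq_def\<close>)
      have gbnd: "\<bar>gg k t\<bar> \<le> Dq q * V * exp (- \<mu> * (sg \<theta> k t - sk \<theta> (b-1))) + \<eta>"
        if "b \<le> k" "k \<le> k1" "t \<in> {\<theta> (2*k-1)..\<theta> (2*k)}" for k t
      proof -
        have tT: "t \<in> Tzero \<theta>" using TzI[OF that(3)] .
        have nI: "nbhd m n r q \<subseteq> I" unfolding nbhd_def I_def by auto
        have nl: "\<bar>(\<Sum>hl\<in>nbhd m n r q. C q hl * f (x t hl)) * x t q - (\<Sum>hl\<in>nbhd m n r q. C q hl * f (x' t hl)) * x' t q\<bar>
              \<le> (Mf + H * Lf) * (\<Sum>hl\<in>nbhd m n r q. C q hl) * W t"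
          by (rule nonlin_bound[OF C3(2) C4(2)]) (use C4(1) Wq nI q xH[OF tT q] C_nonneg in auto)
        have zq: "\<bar>\<zeta> k q - \<zeta>' k q\<bar> < \<eta>"
          using vn_ge[OF q, of "\<zeta> k - \<zeta>' k"] close[of k] that unfolding k1_def by simp
        have "\<bar>gg k t\<bar> \<le> Dq q * W t + \<eta>"
          using nl zq unfolding gg_def Dq_def Lc_def csum_def by (simp add: abs_le_iff) (smt (verit))
        also have "Dq q * W t \<le> Dq q * (V * exp (- \<mu> * (sg \<theta> k t - s0)))"
          using WV[OF that] Dq0 by (intro mult_left_mono) auto
        finally show ?thesis unfolding s0_def by (simp add: mult.assoc)
      qed
      have sc: "exp (\<mu> * (sg \<theta> k t - sk \<theta> (b-1))) * \<bar>x t q - x' t q\<bar>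
          \<le> K q * \<bar>x (\<theta> (2*b-1)) q - x' (\<theta> (2*b-1)) q\<bar> + (Dq q * V) * kf \<theta> p (K q) (lq q - \<mu>)
             + \<eta> * exp (\<mu> * (sg \<theta> k t - sk \<theta> (b-1))) * kf \<theta> p (K q) (lq q)"
      proof (rule scalar_bound[where a = "a q" and Kc = "K q" and lm = "lq q" and ?k1.0 = k1
            and y = "\<lambda>t. x t q - x' t q" and g = gg and ?c1.0 = "Dq q * V" and ?c2.0 = \<eta>])
        show "0 < a q" by (rule apos)
        show "\<And>k. dlt \<theta> k * a q \<noteq> 1" using C1 qI by simp
        show "\<And>l k D. l \<le> k \<Longrightarrow> 0 \<le> D \<Longrightarrow> sk \<theta> (k-1) - sk \<theta> l \<le> D \<Longrightarrow> D \<le> sk \<theta> k - sk \<theta> (l-1) \<Longrightarrow>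
          \<bar>\<Prod>\<nu>\<in>{l..<k}. (1 - dlt \<theta> \<nu> * a q)\<bar> * exp (- a q * D) \<le> K q * exp (- lq q * D)"
          by (rule kern')
        show "((\<lambda>t. x t q - x' t q) has_real_derivative (- a q * (x t q - x' t q) + gg k t))
               (at t within {\<theta> (2*k-1)..\<theta> (2*k)})"
          if "b \<le> k" "k \<le> k1" "t \<in> {\<theta> (2*k-1)..\<theta> (2*k)}" for k t
        proof -
          have e: "(- a q * x t q - (\<Sum>hl\<in>nbhd m n r q. C q hl * f (x t hl)) * x t q + \<zeta> k q)
              - (- a q * x' t q - (\<Sum>hl\<in>nbhd m n r q. C q hl * f (x' t hl)) * x' t q + \<zeta>' k q)
              = - a q * (x t q - x' t q) + gg k t" unfolding gg_def by (simp add: algebra_simps)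
          have "((\<lambda>t. x t q - x' t q) has_real_derivative
              ((- a q * x t q - (\<Sum>hl\<in>nbhd m n r q. C q hl * f (x t hl)) * x t q + \<zeta> k q)
              - (- a q * x' t q - (\<Sum>hl\<in>nbhd m n r q. C q hl * f (x' t hl)) * x' t q + \<zeta>' k q)))
              (at t within {\<theta> (2*k-1)..\<theta> (2*k)})"
            by (rule DERIV_diff[OF sx(1)[OF that(3)] sx'(1)[OF that(3)]])
          then show ?thesis by (simp only: e)
        qed
        show "x (\<theta> (2*k+1)) q - x' (\<theta> (2*k+1)) q
            = (1 - dlt \<theta> k * a q) * (x (\<theta> (2*k)) q - x' (\<theta> (2*k)) q) + dlt \<theta> k * gg k (\<theta> (2*k))"
          if "b \<le> k" "k < k1" for k
          unfolding sx(2)[of k] sx'(2)[of k] gg_def by (simp add: algebra_simps)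
        show "\<bar>gg k t\<bar> \<le> Dq q * V * exp (- \<mu> * (sg \<theta> k t - sk \<theta> (b-1))) + \<eta>"
          if "b \<le> k" "k \<le> k1" "t \<in> {\<theta> (2*k-1)..\<theta> (2*k)}" for k t
          by (rule gbnd[OF that])
      qed (use mu0 muq[OF q] Dq0[of q] V0 eta0 Kpos[OF q] kt in auto)
      have "\<bar>x (\<theta> (2*b-1)) q - x' (\<theta> (2*b-1)) q\<bar> \<le> 2*H"
        using Wq[OF q] W2H[OF TzI[OF bI']] by (meson order_trans)
      then have "K q * \<bar>x (\<theta> (2*b-1)) q - x' (\<theta> (2*b-1)) q\<bar> \<le> K q * (2*H)"
        using Kpos[OF q] by (intro mult_left_mono) auto
      then show ?thesis using sc unfolding s0_def by linarith
    qed
    have keyW: "exp (\<mu> * (sg \<theta> k t - s0)) * W t \<le> Kmax * (2*H) + c' * V + \<eta> * Gr * kfm"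
      if kt: "b \<le> k" "k \<le> k1" "t \<in> {\<theta> (2*k-1)..\<theta> (2*k)}" for k t
    proof -
      define e where "e = exp (\<mu> * (sg \<theta> k t - s0))"
      have e0: "0 < e" unfolding e_def by simp
      have eG: "e \<le> Gr" unfolding e_def Gr_def using span[OF kt(2,3)] mu0 by simp
      define R where "R = Kmax * (2*H) + c' * V + \<eta> * Gr * kfm"
      have "\<bar>(x t - x' t) q\<bar> \<le> R / e" if q: "q \<in> I" for q
      proof -
        have a1: "K q * (2*H) \<le> Kmax * (2*H)" using Kge[OF q] H0 by (intro mult_right_mono) auto
        have a2: "Dq q * V * kf \<theta> p (K q) (lq q - \<mu>) \<le> c' * V"
        proof -
          have "(Dq q * kf \<theta> p (K q) (lq q - \<mu>)) * V \<le> c' * V" using c'ge[OF q] V0 by (rule mult_right_mono)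
          then show ?thesis by (simp add: mult_ac)
        qed
        have kq0: "0 \<le> kf \<theta> p (K q) (lq q)" using kfpos[OF q lq0[OF q]] .
        have a3: "\<eta> * e * kf \<theta> p (K q) (lq q) \<le> \<eta> * Gr * kfm"
          using eG kfge[OF q] kq0 eta0 e0 by (intro mult_mono mult_left_mono) auto
        have "e * \<bar>x t q - x' t q\<bar> \<le> R" using keyq[OF kt q] a1 a2 a3 unfolding R_def e_def by linarith
        then show ?thesis using e0 by (simp add: field_simps)
      qed
      then have "W t \<le> R / e" unfolding W_def by (rule vn_le)
      then show ?thesis using e0 unfolding R_def[symmetric] e_def[symmetric] by (simp add: field_simps)
    qed
    have Vb: "V \<le> Kmax * (2*H) + c' * V + \<eta> * Gr * kfm"
      unfolding V_def
    proof (rule cSup_least)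
      show "WS \<noteq> {}" using WSne by blast
      fix z assume "z \<in> WS"
      then obtain k t where kt: "z = exp (\<mu> * (sg \<theta> k t - s0)) * W t" "b \<le> k" "k \<le> k1" "t \<in> {\<theta> (2*k-1)..\<theta> (2*k)}"
        unfolding WS_def by blast
      show "z \<le> Kmax * (2*H) + c' * Sup WS + \<eta> * Gr * kfm" using keyW[OF kt(2-4)] kt(1) unfolding V_def by simp
    qed
    have Vb2: "V \<le> A + \<eta> * Gr * kfm / (1 - c')"
    proof -
      have "V * (1 - c') \<le> Kmax * (2*H) + \<eta> * Gr * kfm" using Vb by (simp add: algebra_simps)
      then have "V \<le> (Kmax * (2*H) + \<eta> * Gr * kfm) / (1 - c')" using c'1 by (simp add: pos_le_divide_eq)
      then show ?thesis unfolding A_def by (simp add: add_divide_distrib)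
    qed
    define k0 where "k0 = b + int p * int mm"
    show "\<exists>k0::int. \<forall>t \<in> {\<theta> (2*k0 - 1) .. \<theta> (2*(k0 + int E))} \<inter> Tzero \<theta>. vnorm m n (x t - x' t) < \<epsilon>"
    proof (intro exI[of _ k0] ballI)
      fix t assume t: "t \<in> {\<theta> (2*k0 - 1) .. \<theta> (2*(k0 + int E))} \<inter> Tzero \<theta>"
      then have "t \<in> Tzero \<theta>" by simp
      then obtain k where k: "t \<in> {\<theta> (2*k-1)..\<theta> (2*k)}" unfolding Tzero_iff by blast
      have kk0: "k0 \<le> k"
      proof (rule ccontr)
        assume "\<not> k0 \<le> k"
        then have "\<theta> (2*k) < \<theta> (2*k0-1)" by (intro th_less) simp
        then show False using t k by simp
      qed
      have kk1: "k \<le> k0 + int E"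
      proof (rule ccontr)
        assume "\<not> k \<le> k0 + int E"
        then have "\<theta> (2*(k0 + int E)) < \<theta> (2*k-1)" by (intro th_less) simp
        then show False using t k by simp
      qed
      have pm0: "0 \<le> int p * int mm" by simp
      have kb1: "b \<le> k" using kk0 pm0 unfolding k0_def by linarith
      have kb2: "k \<le> k1" using kk1 unfolding k0_def k1_def N_def by simp
      note kb = kb1 kb2
      have "sk \<theta> ((b-1) + int p * int mm) \<le> sk \<theta> (k-1)" using kk0 unfolding k0_def by (intro sk_le) simp
      then have "real mm * Ps \<le> sk \<theta> (k-1) - s0" using sk_per_m[of "b-1" mm] unfolding s0_def Ps_def by simp
      then have sgb: "real mm * Ps \<le> sg \<theta> k t - s0" using sg_bounds(1)[OF k] by simp
      have ex1: "exp (- \<mu> * (sg \<theta> k t - s0)) \<le> exp (- \<mu> * (real mm * Ps))" using sgb mu0 by simp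
      have ex2: "exp (- \<mu> * (real mm * Ps)) \<le> 1" using mu0 Ps0 by simp
      have "W t \<le> V * exp (- \<mu> * (sg \<theta> k t - s0))" by (rule WV[OF kb k])
      also have "\<dots> \<le> V * exp (- \<mu> * (real mm * Ps))" using ex1 V0 by (rule mult_left_mono)
      also have "\<dots> \<le> (A + \<eta> * Gr * kfm / (1 - c')) * exp (- \<mu> * (real mm * Ps))"
        using Vb2 by (rule mult_right_mono) simp
      also have "\<dots> = exp (- \<mu> * (real mm * Ps)) * A + exp (- \<mu> * (real mm * Ps)) * (\<eta> * Gr * kfm / (1 - c'))"
        by (simp add: algebra_simps)
      also have "\<dots> \<le> exp (- \<mu> * (real mm * Ps)) * A + 1 * (\<eta> * Gr * kfm / (1 - c'))"
      proof -
        have "0 \<le> \<eta> * Gr * kfm / (1 - c')" using eta0 Gr1 kfm0 c'1 by simp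
        then have "exp (- \<mu> * (real mm * Ps)) * (\<eta> * Gr * kfm / (1 - c')) \<le> 1 * (\<eta> * Gr * kfm / (1 - c'))"
          using ex2 by (rule mult_right_mono[rotated])
        then show ?thesis by linarith
      qed
      also have "\<dots> < \<epsilon>/2 + \<epsilon>/2" using decay etab by linarith
      finally show "vnorm m n (x t - x' t) < \<epsilon>" unfolding W_def by simp
    qed
  qed
qed


end
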